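(* For problem (P) with $\Phi_\lambda=\Phi_{+,\lambda}$: (i) every stationary point of (P) is a local minimizer of $F$; (ii) if $x^*$ is a local minimizer of $F$ with $F(x^* )<\infty$, and the Slater condition $$\{x:\ x\in\operatorname{ri}(\operatorname{dom}f),\ Ax\in\operatorname{ri}(\operatorname{dom}g),\ (Bx-b)_{\bar J_*}\le0\}\neq\emptyset$$ holds, where $J_*=\{i:(Bx^*-b)_i\ne0\}$, $\bar J_*=[r]\setminus J_*$, and "$\operatorname{ri}$" may be omitted for $f$ (resp. $g$) when $f$ (resp. $g$) is polyhedral, then $x^*$ is a stationary point of (P).
   Context: Let $f:\mathbb R^n\to(-\infty,\infty]$, $g:\mathbb R^m\to(-\infty,\infty]$ be proper, lsc and convex; $A\in\mathbb R^{m\times n}$, $B\in\mathbb R^{r\times n}$, $b\in\mathbb R^r$, $\lambda\in\mathbb R^r$, $\lambda>0$. $\Phi_{+,\lambda}(u)=\sum_{i=1}^r\lambda_i\mathbf 1_{\{u_i>0\}}$; problem (P) is $\min_x F(x)=f(x)+g(Ax)+\Phi_{+,\lambda}(Bx-b)$. $\partial$ denotes the limiting subdifferential (the convex subdifferential for convex functions); $\partial\Phi_{+,\lambda}(u)=\{z: z_i\in\mathbb R_+\text{ if }u_i=0,\ z_i=0\text{ otherwise}\}$. A point $x^*$ is a stationary point of (P) if $0\in\partial f(x^* )+A^\top\partial g(Ax^* )+B^\top\partial\Phi_{+,\lambda}(Bx^*-b)$. $\operatorname{ri}$ denotes relative interior. *)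

theory Defs
  imports "HOL-Analysis.Analysis"
begin

definition edom :: "('a \<Rightarrow> ereal) \<Rightarrow> 'a set" where
  "edom f = {x. f x < \<infinity>}"

definition epigraph_e :: "('a \<Rightarrow> ereal) \<Rightarrow> ('a \<times> real) set" where
  "epigraph_e f = {(x, t). f x \<le> ereal t}"

definition proper_fun :: "('a \<Rightarrow> ereal) \<Rightarrow> bool" where
  "proper_fun f \<longleftrightarrow> (\<forall>x. f x \<noteq> -\<infinity>) \<and> (\<exists>x. f x < \<infinity>)"

definition lsc_fun :: "('a::topological_space \<Rightarrow> ereal) \<Rightarrow> bool" where
  "lsc_fun f \<longleftrightarrow> (\<forall>x. f x \<le> Liminf (at x) f)"

definition convex_fun :: "('a::real_vector \<Rightarrow> ereal) \<Rightarrow> bool" where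
  "convex_fun f \<longleftrightarrow> convex (epigraph_e f)"

definition polyhedral_fun :: "('a::euclidean_space \<Rightarrow> ereal) \<Rightarrow> bool" where
  "polyhedral_fun f \<longleftrightarrow> polyhedron (epigraph_e f)"

definition csubdiff :: "('a::real_inner \<Rightarrow> ereal) \<Rightarrow> 'a \<Rightarrow> 'a set" where
  "csubdiff f x = {v. f x < \<infinity> \<and> (\<forall>y. f x + ereal (v \<bullet> (y - x)) \<le> f y)}"

definition Phi_plus :: "real^'r \<Rightarrow> real^'r \<Rightarrow> real" where
  "Phi_plus lam u = (\<Sum>i\<in>UNIV. lam $ i * (if u $ i > 0 then 1 else 0))"

text \<open>Its (limiting) subdifferential, as given in the paper.\<close>
definition subdiff_Phi_plus :: "real^'r \<Rightarrow> (real^'r) set" where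
  "subdiff_Phi_plus u = {z. \<forall>i. (u $ i = 0 \<longrightarrow> z $ i \<ge> 0) \<and> (u $ i \<noteq> 0 \<longrightarrow> z $ i = 0)}"

definition Fobj :: "(real^'n \<Rightarrow> ereal) \<Rightarrow> (real^'m \<Rightarrow> ereal) \<Rightarrow> real^'n^'m
    \<Rightarrow> real^'n^'r \<Rightarrow> real^'r \<Rightarrow> real^'r \<Rightarrow> real^'n \<Rightarrow> ereal" where
  "Fobj f g A B b lam x = f x + g (A *v x) + ereal (Phi_plus lam (B *v x - b))"

definition stationary :: "(real^'n \<Rightarrow> ereal) \<Rightarrow> (real^'m \<Rightarrow> ereal) \<Rightarrow> real^'n^'m
    \<Rightarrow> real^'n^'r \<Rightarrow> real^'r \<Rightarrow> real^'n \<Rightarrow> bool" where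
  "stationary f g A B b x \<longleftrightarrow>
     (\<exists>u v z. u \<in> csubdiff f x \<and> v \<in> csubdiff g (A *v x) \<and> z \<in> subdiff_Phi_plus (B *v x - b)
        \<and> u + transpose A *v v + transpose B *v z = 0)"

definition local_minimizer :: "('a::metric_space \<Rightarrow> ereal) \<Rightarrow> 'a \<Rightarrow> bool" where
  "local_minimizer F x \<longleftrightarrow> (\<exists>e>0. \<forall>y\<in>ball x e. F x \<le> F y)"

end

theory Submission
  imports Defs
begin

lemma ri_zero:
  fixes C :: "'a::euclidean_space set"
  assumes "convex C" "w1 \<in> rel_interior C" "\<forall>w\<in>C. c \<bullet> w \<le> 0" "c \<bullet> w1 = 0" "w \<in> C"
  shows "c \<bullet> w = 0"
proof -
  have "w \<in> affine hull C" using assms(5) by (simp add: hull_inc)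
  then obtain m where m: "m > 1" "\<forall>e. e > 1 \<and> e \<le> m \<longrightarrow> (1 - e) *\<^sub>R w + e *\<^sub>R w1 \<in> C"
    using convex_rel_interior_if[OF assms(1,2)] by blast
  have "(1 - m) *\<^sub>R w + m *\<^sub>R w1 \<in> C" using m by auto
  hence "c \<bullet> ((1 - m) *\<^sub>R w + m *\<^sub>R w1) \<le> 0" using assms(3) by blast
  hence "(1 - m) * (c \<bullet> w) \<le> 0" using assms(4) by (simp add: inner_add_right)
  hence "c \<bullet> w \<ge> 0" using m(1) by (simp add: mult_le_0_iff)
  thus ?thesis using assms(3,5) by force
qed

lemma peel:
  fixes C :: "'a::euclidean_space set"
  assumes conv: "convex C" and z0: "0 \<in> C" and w1: "w1 \<in> C" "m \<bullet> w1 < 0"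
    and H: "\<forall>w\<in>C. m \<bullet> w \<le> 0 \<longrightarrow> a \<bullet> w \<le> 0"
  shows "\<exists>\<mu>\<ge>0. \<forall>w\<in>C. (a - \<mu> *\<^sub>R m) \<bullet> w \<le> 0"
proof -
  define S :: "(real \<times> real) set" where "S = {(y, al). \<exists>w\<in>C. m \<bullet> w \<le> y \<and> al \<le> a \<bullet> w}"
  define T :: "(real \<times> real) set" where "T = {(y, al). y \<le> 0 \<and> al > 0}"
  have cS: "convex S" unfolding convex_def S_def
  proof (clarsimp)
    fix y al w y' al' w' and u v :: real
    assume *: "w \<in> C" "m \<bullet> w \<le> y" "al \<le> a \<bullet> w" "w' \<in> C" "m \<bullet> w' \<le> y'" "al' \<le> a \<bullet> w'"
      "0 \<le> u" "0 \<le> v" "u + v = 1"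
    show "\<exists>w\<in>C. m \<bullet> w \<le> u * y + v * y' \<and> u * al + v * al' \<le> a \<bullet> w"
    proof (intro bexI[of _ "u *\<^sub>R w + v *\<^sub>R w'"] conjI)
      show "u *\<^sub>R w + v *\<^sub>R w' \<in> C" using conv * unfolding convex_def by blast
      show "m \<bullet> (u *\<^sub>R w + v *\<^sub>R w') \<le> u * y + v * y'"
        using * by (simp add: inner_add_right add_mono mult_left_mono)
      show "u * al + v * al' \<le> a \<bullet> (u *\<^sub>R w + v *\<^sub>R w')"
        using * by (simp add: inner_add_right add_mono mult_left_mono)
    qed
  qed
  have cT: "convex T" unfolding convex_def T_def
    by (clarsimp, smt (verit) mult_nonneg_nonneg mult_pos_pos mult_nonneg_nonpos)
  have S0: "(0,0) \<in> S" unfolding S_def using z0 by (auto intro!: bexI[of _ 0])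
  have T1: "(-1,1) \<in> T" unfolding T_def by simp
  have disj: "S \<inter> T = {}"
    unfolding S_def T_def using H by force
  obtain c bb where c: "c \<noteq> 0" "\<forall>x\<in>S. c \<bullet> x \<le> bb" "\<forall>x\<in>T. c \<bullet> x \<ge> bb"
    using separating_hyperplane_sets[OF cS cT _ _ disj] S0 T1 by blast
  obtain c1 c2 where cc: "c = (c1, c2)" by fastforce
  have b0: "bb \<ge> 0"
  proof -
    have "c \<bullet> (0,0) \<le> bb" using c(2) S0 by blast
    thus ?thesis by (simp add: cc)
  qed
  have c2: "c2 \<ge> 0" using c(3)[rule_format, of "(0,1)"] b0 cc unfolding T_def by simp
  have bb0: "bb \<le> 0"
  proof (rule ccontr)
    assume "\<not> bb \<le> 0"
    hence "bb > 0" by simp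
    hence "c2 > 0" using c(3)[rule_format, of "(0,1)"] cc unfolding T_def by simp
    have "(0, bb / (2*c2)) \<in> T" unfolding T_def using \<open>bb>0\<close> \<open>c2>0\<close> by simp
    hence "c \<bullet> (0, bb/(2*c2)) \<ge> bb" using c(3) by blast
    hence "c2 * (bb/(2*c2)) \<ge> bb" by (simp add: cc)
    thus False using \<open>bb>0\<close> \<open>c2>0\<close> by simp
  qed
  have c1: "c1 \<le> 0"
  proof (rule ccontr)
    assume "\<not> c1 \<le> 0"
    hence "c1 > 0" by simp
    have "(- (c2 + 1) / c1, 1) \<in> T" unfolding T_def using \<open>c1>0\<close> c2
      by (simp add: divide_nonneg_pos divide_nonpos_pos)
    hence "c \<bullet> (- (c2 + 1) / c1, 1) \<ge> bb" using c(3) by blast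
    hence "c1 * (- (c2 + 1) / c1) + c2 \<ge> bb" by (simp add: cc)
    thus False using \<open>c1>0\<close> b0 by simp
  qed
  have main: "c1 * (m \<bullet> w) + c2 * (a \<bullet> w) \<le> 0" if "w \<in> C" for w
  proof -
    have "(m \<bullet> w, a \<bullet> w) \<in> S" unfolding S_def using that by force
    hence "c \<bullet> (m \<bullet> w, a \<bullet> w) \<le> bb" using c(2) by blast
    thus ?thesis using bb0 by (simp add: cc)
  qed
  show ?thesis
  proof (cases "c2 = 0")
    case True
    hence "c1 < 0" using c(1) cc c1 by (cases "c1 = 0") (auto simp: zero_prod_def)
    have "c1 * (m \<bullet> w1) \<le> 0" using main[OF w1(1)] True by simp
    moreover have "c1 * (m \<bullet> w1) > 0" using \<open>c1 < 0\<close> w1(2) by (simp add: mult_neg_neg)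
    ultimately show ?thesis by simp
  next
    case False
    hence "c2 > 0" using c2 by simp
    show ?thesis
    proof (intro exI[of _ "- c1 / c2"] conjI ballI)
      show "- c1 / c2 \<ge> 0" using c1 \<open>c2>0\<close> by (simp add: divide_nonneg_pos divide_nonpos_pos)
      fix w assume "w \<in> C"
      have "c1 * (m \<bullet> w) + c2 * (a \<bullet> w) \<le> 0" using main[OF \<open>w\<in>C\<close>] .
      hence "(c1 * (m \<bullet> w) + c2 * (a \<bullet> w)) / c2 \<le> 0" using \<open>c2>0\<close> by (simp add: divide_nonpos_pos)
      thus "(a - (- c1 / c2) *\<^sub>R m) \<bullet> w \<le> 0" using \<open>c2>0\<close>
        by (simp add: inner_diff_left add_divide_distrib algebra_simps)
    qed
  qed
qed

lemma strict_mult: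
  fixes C :: "'a::euclidean_space set" and m :: "'i \<Rightarrow> 'a"
  assumes "finite I" "convex C" "0 \<in> C" "w1 \<in> C" "\<forall>i\<in>I. m i \<bullet> w1 < 0"
    "\<forall>w\<in>C. (\<forall>i\<in>I. m i \<bullet> w \<le> 0) \<longrightarrow> a \<bullet> w \<le> 0"
  shows "\<exists>\<eta>. (\<forall>i\<in>I. \<eta> i \<ge> 0) \<and> (\<forall>w\<in>C. (a - (\<Sum>i\<in>I. \<eta> i *\<^sub>R m i)) \<bullet> w \<le> 0)"
  using assms
proof (induction I arbitrary: C rule: finite_induct)
  case empty
  then show ?case by auto
next
  case (insert i I)
  define C1 where "C1 = C \<inter> {w. m i \<bullet> w \<le> 0}"
  have "convex C1" unfolding C1_def using insert.prems(1) by (simp add: convex_Int convex_halfspace_le)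
  moreover have "0 \<in> C1" "w1 \<in> C1" unfolding C1_def using insert.prems by auto
  moreover have "\<forall>i\<in>I. m i \<bullet> w1 < 0" using insert.prems by auto
  moreover have "\<forall>w\<in>C1. (\<forall>i\<in>I. m i \<bullet> w \<le> 0) \<longrightarrow> a \<bullet> w \<le> 0"
    using insert.prems unfolding C1_def by auto
  ultimately obtain \<eta> where eta: "\<forall>i\<in>I. \<eta> i \<ge> 0" "\<forall>w\<in>C1. (a - (\<Sum>i\<in>I. \<eta> i *\<^sub>R m i)) \<bullet> w \<le> 0"
    using insert.IH by blast
  obtain \<mu> where mu: "\<mu> \<ge> 0" "\<forall>w\<in>C. (a - (\<Sum>i\<in>I. \<eta> i *\<^sub>R m i) - \<mu> *\<^sub>R m i) \<bullet> w \<le> 0"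
    using peel[OF insert.prems(1,2,3), of "m i" "a - (\<Sum>i\<in>I. \<eta> i *\<^sub>R m i)"] insert.prems(4) eta(2)
    unfolding C1_def by auto
  have "(\<Sum>j\<in>insert i I. (\<eta>(i:=\<mu>)) j *\<^sub>R m j) = \<mu> *\<^sub>R m i + (\<Sum>j\<in>I. \<eta> j *\<^sub>R m j)"
    using insert.hyps by (simp add: sum.insert, intro sum.cong) auto
  hence "\<forall>w\<in>C. (a - (\<Sum>j\<in>insert i I. (\<eta>(i:=\<mu>)) j *\<^sub>R m j)) \<bullet> w \<le> 0"
    using mu(2) by (simp add: algebra_simps)
  moreover have "\<forall>j\<in>insert i I. (\<eta>(i:=\<mu>)) j \<ge> 0" using eta(1) mu(1) by auto
  ultimately show ?case by blast
qed

lemma perpE: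
  fixes m :: "'i \<Rightarrow> 'a::euclidean_space"
  assumes "finite J" "\<forall>w. (\<forall>j\<in>J. m j \<bullet> w = 0) \<longrightarrow> c \<bullet> w = 0"
  shows "\<exists>\<gamma>. c = (\<Sum>j\<in>J. \<gamma> j *\<^sub>R m j)"
proof -
  define V where "V = range (\<lambda>\<gamma>. \<Sum>j\<in>J. \<gamma> j *\<^sub>R m j)"
  have sV: "subspace V" unfolding subspace_def V_def
  proof (intro conjI ballI allI)
    show "0 \<in> range (\<lambda>\<gamma>. \<Sum>j\<in>J. \<gamma> j *\<^sub>R m j)" by (rule range_eqI[of _ _ "\<lambda>_. 0"]) simp
    fix x y assume "x \<in> range (\<lambda>\<gamma>. \<Sum>j\<in>J. \<gamma> j *\<^sub>R m j)" "y \<in> range (\<lambda>\<gamma>. \<Sum>j\<in>J. \<gamma> j *\<^sub>R m j)"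
    then obtain g1 g2 where "x = (\<Sum>j\<in>J. g1 j *\<^sub>R m j)" "y = (\<Sum>j\<in>J. g2 j *\<^sub>R m j)" by auto
    thus "x + y \<in> range (\<lambda>\<gamma>. \<Sum>j\<in>J. \<gamma> j *\<^sub>R m j)"
      by (intro range_eqI[of _ _ "\<lambda>j. g1 j + g2 j"]) (simp add: sum.distrib scaleR_add_left)
  next
    fix k :: real and x assume "x \<in> range (\<lambda>\<gamma>. \<Sum>j\<in>J. \<gamma> j *\<^sub>R m j)"
    then obtain g1 where "x = (\<Sum>j\<in>J. g1 j *\<^sub>R m j)" by auto
    thus "k *\<^sub>R x \<in> range (\<lambda>\<gamma>. \<Sum>j\<in>J. \<gamma> j *\<^sub>R m j)"
      by (intro range_eqI[of _ _ "\<lambda>j. k * g1 j"]) (simp add: scaleR_sum_right)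
  qed
  have "c \<in> V\<^sup>\<bottom>\<^sup>\<bottom>"
    unfolding orthogonal_comp_def orthogonal_def
  proof (clarsimp)
    fix y assume y: "\<forall>x\<in>V. x \<bullet> y = 0"
    have "m j \<bullet> y = 0" if "j \<in> J" for j
    proof -
      have "(\<Sum>i\<in>J. (if i = j then 1 else 0) *\<^sub>R m i) = m j"
        proof -
        have "(\<Sum>i\<in>J. (if i = j then 1 else 0) *\<^sub>R m i) = (\<Sum>i\<in>J. if i = j then m i else 0)"
          by (rule sum.cong) auto
        thus ?thesis using assms(1) that by (simp add: sum.delta)
      qed
      hence "m j \<in> V" unfolding V_def
        by (intro image_eqI[where f="\<lambda>\<gamma>. \<Sum>j\<in>J. \<gamma> j *\<^sub>R m j" and x="\<lambda>i. if i = j then 1 else 0"]) auto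
      thus ?thesis using y by blast
    qed
    hence "c \<bullet> y = 0" using assms(2) by blast
    thus "y \<bullet> c = 0" by (simp add: inner_commute)
  qed
  hence "c \<in> V" using orthogonal_comp_self[OF sV] by simp
  thus ?thesis unfolding V_def by auto
qed

lemma sub_rule:
  fixes C :: "'a::euclidean_space set" and m :: "'i \<Rightarrow> 'a"
  assumes fin: "finite J" and conv: "convex C" and z0: "0 \<in> C" and ri: "w1 \<in> rel_interior C"
    and w1E: "\<forall>j\<in>J. m j \<bullet> w1 = 0"
    and H: "\<forall>w\<in>C. (\<forall>j\<in>J. m j \<bullet> w = 0) \<longrightarrow> a \<bullet> w \<le> 0"
  shows "\<exists>\<gamma>. \<forall>w\<in>C. (a - (\<Sum>j\<in>J. \<gamma> j *\<^sub>R m j)) \<bullet> w \<le> 0"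
proof -
  define E where "E = {w. \<forall>j\<in>J. m j \<bullet> w = 0}"
  define R where "R = {r. \<forall>x\<in>C \<union> E. x \<bullet> r = 0}"
  define S :: "('a \<times> real) set" where
    "S = {p. \<exists>w\<in>C. \<exists>e\<in>E. \<exists>r\<in>R. fst p = w + e + r \<and> snd p \<le> a \<bullet> w}"
  define T :: "('a \<times> real) set" where "T = {p. fst p = 0 \<and> snd p > 0}"
  have Ecl: "u *\<^sub>R e + v *\<^sub>R e' \<in> E" if "e \<in> E" "e' \<in> E" for u v e e'
    using that unfolding E_def by (simp add: inner_add_right)
  have Rcl: "u *\<^sub>R e + v *\<^sub>R e' \<in> R" if "e \<in> R" "e' \<in> R" for u v e e'
    using that unfolding R_def by (simp add: inner_add_right)
  have cS: "convex S" unfolding convex_def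
  proof (intro ballI allI impI)
    fix p q and u v :: real assume p: "p \<in> S" and q: "q \<in> S" and uv: "0 \<le> u" "0 \<le> v" "u + v = 1"
    obtain w e r where w: "w \<in> C" "e \<in> E" "r \<in> R" "fst p = w + e + r" "snd p \<le> a \<bullet> w"
      using p unfolding S_def by blast
    obtain w' e' r' where w': "w' \<in> C" "e' \<in> E" "r' \<in> R" "fst q = w' + e' + r'" "snd q \<le> a \<bullet> w'"
      using q unfolding S_def by blast
    have "u *\<^sub>R w + v *\<^sub>R w' \<in> C" using conv w(1) w'(1) uv unfolding convex_def by blast
    moreover have "u *\<^sub>R e + v *\<^sub>R e' \<in> E" using Ecl w(2) w'(2) by blast
    moreover have "u *\<^sub>R r + v *\<^sub>R r' \<in> R" using Rcl w(3) w'(3) by blast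
    moreover have "fst (u *\<^sub>R p + v *\<^sub>R q) = (u *\<^sub>R w + v *\<^sub>R w') + (u *\<^sub>R e + v *\<^sub>R e') + (u *\<^sub>R r + v *\<^sub>R r')"
      using w(4) w'(4) by (simp add: algebra_simps)
    moreover have "snd (u *\<^sub>R p + v *\<^sub>R q) \<le> a \<bullet> (u *\<^sub>R w + v *\<^sub>R w')"
      using w(5) w'(5) uv by (simp add: inner_add_right add_mono mult_left_mono)
    ultimately show "u *\<^sub>R p + v *\<^sub>R q \<in> S" unfolding S_def by blast
  qed
  have cT: "convex T" unfolding convex_def T_def
    by (clarsimp, smt (verit) mult_nonneg_nonneg mult_pos_pos)
  have E0: "0 \<in> E" unfolding E_def by simp
  have R0: "0 \<in> R" unfolding R_def by simp
  have inS: "(w + e + r, al) \<in> S" if "w \<in> C" "e \<in> E" "r \<in> R" "al \<le> a \<bullet> w" for w e r al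
    unfolding S_def using that by force
  have S0: "(0,0) \<in> S" using inS[OF z0 E0 R0, of 0] by simp
  have T1: "(0,1) \<in> T" unfolding T_def by simp
  have disj: "S \<inter> T = {}"
  proof (rule ccontr)
    assume "S \<inter> T \<noteq> {}"
    then obtain p w e r where p: "w \<in> C" "e \<in> E" "r \<in> R" "fst p = w + e + r" "snd p \<le> a \<bullet> w"
      "fst p = 0" "snd p > 0" unfolding S_def T_def by blast
    have rr: "r = - w - e" using p(4,6) by (simp add: algebra_simps eq_neg_iff_add_eq_0)
    have "w \<bullet> r = 0" "e \<bullet> r = 0" using p(1,2,3) unfolding R_def by auto
    hence "r \<bullet> r = 0" using rr by (simp add: inner_diff_left inner_commute)
    hence "r = 0" by simp
    hence "w = - e" using rr by simp (metis minus_minus)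
    hence "w \<in> E" using p(2) unfolding E_def by simp
    hence "a \<bullet> w \<le> 0" using H p(1) unfolding E_def by blast
    thus False using p(5,7) by simp
  qed
  obtain c bb where c: "c \<noteq> 0" "\<forall>x\<in>S. c \<bullet> x \<le> bb" "\<forall>x\<in>T. c \<bullet> x \<ge> bb"
    using separating_hyperplane_sets[OF cS cT _ _ disj] S0 T1 by blast
  obtain c1 c2 where cc: "c = (c1, c2)" by fastforce
  have b0: "bb \<ge> 0"
  proof -
    have "c \<bullet> (0,0) \<le> bb" using c(2) S0 by blast
    thus ?thesis by (simp add: cc)
  qed
  have c2: "c2 \<ge> 0"
  proof -
    have "c \<bullet> (0,1) \<ge> bb" using c(3) T1 by blast
    thus ?thesis using b0 by (simp add: cc)
  qed
  have bb0: "bb \<le> 0"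
  proof (rule ccontr)
    assume "\<not> bb \<le> 0"
    hence "bb > 0" by simp
    have "c \<bullet> (0,1) \<ge> bb" using c(3) T1 by blast
    hence "c2 > 0" using \<open>bb > 0\<close> by (simp add: cc)
    have "(0, bb / (2*c2)) \<in> T" unfolding T_def using \<open>bb>0\<close> \<open>c2>0\<close> by simp
    hence "c \<bullet> (0, bb/(2*c2)) \<ge> bb" using c(3) by blast
    hence "c2 * (bb/(2*c2)) \<ge> bb" by (simp add: cc)
    thus False using \<open>bb>0\<close> \<open>c2>0\<close> by simp
  qed
  have Sle: "c1 \<bullet> (w + e + r) + c2 * al \<le> 0" if "w \<in> C" "e \<in> E" "r \<in> R" "al \<le> a \<bullet> w" for w e r al
  proof -
    have "c \<bullet> (w + e + r, al) \<le> bb" using c(2) inS[OF that] by blast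
    thus ?thesis using bb0 by (simp add: cc)
  qed
  have cE: "c1 \<bullet> e = 0" if "e \<in> E" for e
  proof -
    have "-e \<in> E" using that unfolding E_def by simp
    have "c1 \<bullet> e \<le> 0" using Sle[OF z0 that R0, of 0] by simp
    moreover have "c1 \<bullet> (-e) \<le> 0" using Sle[OF z0 \<open>-e\<in>E\<close> R0, of 0] by simp
    ultimately show ?thesis by simp
  qed
  have cR: "c1 \<bullet> r = 0" if "r \<in> R" for r
  proof -
    have "-r \<in> R" using that unfolding R_def by simp
    have "c1 \<bullet> r \<le> 0" using Sle[OF z0 E0 that, of 0] by simp
    moreover have "c1 \<bullet> (-r) \<le> 0" using Sle[OF z0 E0 \<open>-r\<in>R\<close>, of 0] by simp
    ultimately show ?thesis by simp
  qed
  have cC: "c1 \<bullet> w + c2 * (a \<bullet> w) \<le> 0" if "w \<in> C" for w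
    using Sle[OF that E0 R0, of "a \<bullet> w"] by simp
  show ?thesis
  proof (cases "c2 = 0")
    case True
    hence "c1 \<noteq> 0" using c(1) cc by (auto simp: zero_prod_def)
    have w1C: "w1 \<in> C" using ri rel_interior_subset by blast
    have "w1 \<in> E" using w1E unfolding E_def by simp
    hence "c1 \<bullet> w1 = 0" using cE by blast
    have "\<forall>w\<in>C. c1 \<bullet> w \<le> 0" using cC True by simp
    hence "c1 \<bullet> w = 0" if "w \<in> C" for w using ri_zero[OF conv ri _ \<open>c1 \<bullet> w1 = 0\<close> that] by blast
    hence "c1 \<in> R" unfolding R_def using cE by (auto simp: inner_commute)
    hence "c1 \<bullet> c1 = 0" using cR by blast
    thus ?thesis using \<open>c1 \<noteq> 0\<close> by simp
  next
    case False
    hence "c2 > 0" using c2 by simp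
    have "\<forall>w. (\<forall>j\<in>J. m j \<bullet> w = 0) \<longrightarrow> (- (1/c2) *\<^sub>R c1) \<bullet> w = 0"
      using cE unfolding E_def by simp
    then obtain \<gamma> where g: "- (1/c2) *\<^sub>R c1 = (\<Sum>j\<in>J. \<gamma> j *\<^sub>R m j)" using perpE[OF fin] by blast
    have "(a - (\<Sum>j\<in>J. \<gamma> j *\<^sub>R m j)) \<bullet> w \<le> 0" if "w \<in> C" for w
    proof -
      have "(c1 \<bullet> w + c2 * (a \<bullet> w)) / c2 \<le> 0" using cC[OF that] \<open>c2>0\<close> by (simp add: divide_nonpos_pos)
      thus ?thesis unfolding g[symmetric] using \<open>c2>0\<close> by (simp add: inner_diff_left add_divide_distrib algebra_simps)
    qed
    thus ?thesis by blast
  qed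
qed

lemma hull_comb:
  fixes m :: "'i \<Rightarrow> 'a::real_vector"
  assumes "finite T" "x \<in> convex hull (m ` T)"
  shows "\<exists>\<eta>. (\<forall>i\<in>T. \<eta> i \<ge> 0) \<and> sum \<eta> T = 1 \<and> x = (\<Sum>i\<in>T. \<eta> i *\<^sub>R m i)"
  using assms
proof (induction T arbitrary: x rule: finite_induct)
  case empty
  then show ?case by simp
next
  case (insert i T)
  show ?case
  proof (cases "T = {}")
    case True
    hence "x = m i" using insert.prems by simp
    thus ?thesis using True by (intro exI[of _ "\<lambda>_. 1"]) simp
  next
    case False
    hence "m ` T \<noteq> {}" by simp
    from insert.prems[unfolded image_insert convex_hull_insert[OF this]]
    obtain u v y where uv: "u \<ge> 0" "v \<ge> 0" "u + v = 1" "y \<in> convex hull (m ` T)" "x = u *\<^sub>R m i + v *\<^sub>R y"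
      by blast
    obtain \<eta> where eta: "\<forall>i\<in>T. \<eta> i \<ge> 0" "sum \<eta> T = 1" "y = (\<Sum>i\<in>T. \<eta> i *\<^sub>R m i)"
      using insert.IH[OF uv(4)] by blast
    define \<eta>' where "\<eta>' = (\<lambda>j. v * \<eta> j)(i := u)"
    have s1: "sum \<eta>' T = v * sum \<eta> T" unfolding \<eta>'_def using insert.hyps
      by (simp add: sum_distrib_left, intro sum.cong) auto
    have s2: "(\<Sum>j\<in>T. \<eta>' j *\<^sub>R m j) = v *\<^sub>R (\<Sum>j\<in>T. \<eta> j *\<^sub>R m j)" unfolding \<eta>'_def using insert.hyps
      by (simp add: scaleR_sum_right, intro sum.cong) auto
    show ?thesis
    proof (intro exI[of _ \<eta>'] conjI)
      show "\<forall>j\<in>insert i T. \<eta>' j \<ge> 0" unfolding \<eta>'_def using eta(1) uv by auto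
      show "sum \<eta>' (insert i T) = 1" using insert.hyps s1 eta(2) uv(3) by (simp add: \<eta>'_def)
      show "x = (\<Sum>j\<in>insert i T. \<eta>' j *\<^sub>R m j)" using insert.hyps s2 eta(3) uv(5) by (simp add: \<eta>'_def)
    qed
  qed
qed

lemma lin_zero:
  fixes al be bb :: real
  assumes "\<forall>t. al + t * be > bb"
  shows "be = 0"
proof (rule ccontr)
  assume "be \<noteq> 0"
  have "al + ((bb - al) / be) * be > bb" using assms by blast
  thus False using \<open>be \<noteq> 0\<close> by simp
qed

lemma gordan:
  fixes C :: "'a::euclidean_space set" and m :: "'i \<Rightarrow> 'a"
  assumes finT: "finite T" and neT: "T \<noteq> {}" and finJ: "finite J"
  shows "(\<exists>d \<in> span C. (\<forall>j\<in>J. m j \<bullet> d = 0) \<and> (\<forall>i\<in>T. m i \<bullet> d < 0))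
    \<or> (\<exists>\<eta> \<rho> \<gamma>. (\<forall>i\<in>T. \<eta> i \<ge> 0) \<and> sum \<eta> T = 1 \<and> (\<forall>w\<in>C. \<rho> \<bullet> w = 0)
          \<and> (\<Sum>i\<in>T. \<eta> i *\<^sub>R m i) = \<rho> + (\<Sum>j\<in>J. \<gamma> j *\<^sub>R m j))"
proof -
  define Y where "Y = {y. \<exists>\<rho> \<gamma>. (\<forall>w\<in>C. \<rho> \<bullet> w = 0) \<and> y = \<rho> + (\<Sum>j\<in>J. \<gamma> j *\<^sub>R m j)}"
  define Xc where "Xc = convex hull (m ` T)"
  define X where "X = (\<Union>x\<in>Xc. \<Union>y\<in>Y. {x + y})"
  have sY: "subspace Y" unfolding subspace_def
  proof (intro conjI ballI allI)
    show "0 \<in> Y" unfolding Y_def by (rule CollectI, rule exI[of _ 0], rule exI[of _ "\<lambda>_. 0"]) simp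
    fix x y assume "x \<in> Y" "y \<in> Y"
    then obtain r1 g1 r2 g2 where "\<forall>w\<in>C. r1 \<bullet> w = 0" "x = r1 + (\<Sum>j\<in>J. g1 j *\<^sub>R m j)"
      "\<forall>w\<in>C. r2 \<bullet> w = 0" "y = r2 + (\<Sum>j\<in>J. g2 j *\<^sub>R m j)" unfolding Y_def by blast
    thus "x + y \<in> Y" unfolding Y_def
      by (intro CollectI exI[of _ "r1 + r2"] exI[of _ "\<lambda>j. g1 j + g2 j"])
         (simp add: sum.distrib scaleR_add_left inner_add_left algebra_simps)
  next
    fix k :: real and x assume "x \<in> Y"
    then obtain r1 g1 where "\<forall>w\<in>C. r1 \<bullet> w = 0" "x = r1 + (\<Sum>j\<in>J. g1 j *\<^sub>R m j)" unfolding Y_def by blast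
    thus "k *\<^sub>R x \<in> Y" unfolding Y_def
      by (intro CollectI exI[of _ "k *\<^sub>R r1"] exI[of _ "\<lambda>j. k * g1 j"])
         (simp add: scaleR_sum_right scaleR_add_right)
  qed
  have cX: "closed X" unfolding X_def Xc_def
    by (rule compact_closed_sums, rule compact_convex_hull, rule finite_imp_compact,
        simp add: finT, rule closed_subspace[OF sY])
  have vX: "convex X" unfolding X_def Xc_def
    by (rule convex_sums, rule convex_convex_hull, rule subspace_imp_convex[OF sY])
  have Y0: "0 \<in> Y" using sY by (simp add: subspace_0)
  have mX: "m i \<in> X" if "i \<in> T" for i
  proof -
    have "m i \<in> Xc" unfolding Xc_def using that by (simp add: hull_inc)
    thus ?thesis unfolding X_def using Y0 by force
  qed
  show ?thesis
  proof (cases "0 \<in> X")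
    case True
    then obtain x y where xy: "x \<in> Xc" "y \<in> Y" "0 = x + y" unfolding X_def by blast
    obtain \<eta> where eta: "\<forall>i\<in>T. \<eta> i \<ge> 0" "sum \<eta> T = 1" "x = (\<Sum>i\<in>T. \<eta> i *\<^sub>R m i)"
      using hull_comb[OF finT] xy(1) unfolding Xc_def by blast
    obtain r g where rg: "\<forall>w\<in>C. r \<bullet> w = 0" "y = r + (\<Sum>j\<in>J. g j *\<^sub>R m j)" using xy(2) unfolding Y_def by blast
    have "(\<Sum>i\<in>T. \<eta> i *\<^sub>R m i) = (- r) + (\<Sum>j\<in>J. (- g j) *\<^sub>R m j)"
      proof -
      have "x = - y" using xy(3) by (simp add: eq_neg_iff_add_eq_0)
      thus ?thesis using eta(3) rg(2) by (simp add: sum_negf)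
    qed
    moreover have "\<forall>w\<in>C. (- r) \<bullet> w = 0" using rg(1) by simp
    ultimately show ?thesis using eta(1,2)
      by (intro disjI2 exI[of _ \<eta>] exI[of _ "- r"] exI[of _ "\<lambda>j. - g j"]) simp
  next
    case False
    obtain a bb where ab: "a \<noteq> 0" "0 < bb" "\<forall>x\<in>X. a \<bullet> x > bb"
      using separating_hyperplane_closed_0[OF vX cX False] by blast
    obtain i0 where "i0 \<in> T" using neT by blast
    have aY: "a \<bullet> y = 0" if "y \<in> Y" for y
    proof -
      have "\<forall>t. a \<bullet> m i0 + t * (a \<bullet> y) > bb"
      proof
        fix t :: real
        have "t *\<^sub>R y \<in> Y" using sY that by (simp add: subspace_scale)
        moreover have "m i0 \<in> Xc" unfolding Xc_def using \<open>i0 \<in> T\<close> by (simp add: hull_inc)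
        ultimately have "m i0 + t *\<^sub>R y \<in> X" unfolding X_def by blast
        hence "a \<bullet> (m i0 + t *\<^sub>R y) > bb" using ab(3) by blast
        thus "a \<bullet> m i0 + t * (a \<bullet> y) > bb" by (simp add: inner_add_right)
      qed
      thus ?thesis by (rule lin_zero)
    qed
    have "a \<in> (C\<^sup>\<bottom>)\<^sup>\<bottom>" unfolding orthogonal_comp_def orthogonal_def
    proof (clarsimp)
      fix r assume "\<forall>y\<in>C. y \<bullet> r = 0"
      hence "r \<in> Y" unfolding Y_def by (intro CollectI exI[of _ r] exI[of _ "\<lambda>_. 0"]) (simp add: inner_commute)
      thus "r \<bullet> a = 0" using aY by (metis inner_commute)
    qed
    moreover have "(C\<^sup>\<bottom>)\<^sup>\<bottom> \<subseteq> ((span C)\<^sup>\<bottom>)\<^sup>\<bottom>"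
      by (intro orthogonal_comp_anti_mono span_superset)
    ultimately have "a \<in> span C" using orthogonal_comp_self[OF subspace_span] by blast
    hence "- a \<in> span C" by (simp add: span_neg)
    moreover have "m j \<bullet> (- a) = 0" if "j \<in> J" for j
    proof -
      have "(\<Sum>i\<in>J. (if i = j then 1 else 0) *\<^sub>R m i) = (\<Sum>i\<in>J. if i = j then m i else 0)"
        by (rule sum.cong) auto
      hence "(\<Sum>i\<in>J. (if i = j then 1 else 0) *\<^sub>R m i) = m j" using finJ that by (simp add: sum.delta)
      hence "m j \<in> Y" unfolding Y_def
        by (intro CollectI exI[of _ 0] exI[of _ "\<lambda>i. if i = j then 1 else 0"]) simp
      hence "a \<bullet> m j = 0" using aY by blast
      thus ?thesis by (simp add: inner_commute)
    qed
    moreover have "m i \<bullet> (- a) < 0" if "i \<in> T" for i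
    proof -
      have "a \<bullet> m i > bb" using ab(3) mX[OF that] by blast
      thus ?thesis using ab(2) by (simp add: inner_commute)
    qed
    ultimately show ?thesis by blast
  qed
qed

lemma strict_case:
  fixes C :: "'a::euclidean_space set" and m :: "'i \<Rightarrow> 'a"
  assumes conv: "convex C" and z0: "0 \<in> C" and finI: "finite I" and finJ: "finite J"
    and ri: "w1 \<in> rel_interior C" and sI: "\<forall>i\<in>I. m i \<bullet> w1 < 0" and sJ: "\<forall>j\<in>J. m j \<bullet> w1 = 0"
    and H: "\<forall>w\<in>C. (\<forall>i\<in>I. m i \<bullet> w \<le> 0) \<longrightarrow> (\<forall>j\<in>J. m j \<bullet> w = 0) \<longrightarrow> z \<bullet> w \<le> 0"
  shows "\<exists>a \<eta> \<gamma>. (\<forall>w\<in>C. a \<bullet> w \<le> 0) \<and> (\<forall>i\<in>I. \<eta> i \<ge> 0)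
            \<and> z = a + (\<Sum>i\<in>I. \<eta> i *\<^sub>R m i) + (\<Sum>j\<in>J. \<gamma> j *\<^sub>R m j)"
proof -
  define E where "E = {w. \<forall>j\<in>J. m j \<bullet> w = 0}"
  have cE: "convex E" unfolding E_def convex_def by (simp add: inner_add_right)
  have w1C: "w1 \<in> C" using ri rel_interior_subset by blast
  obtain \<eta> where eta: "\<forall>i\<in>I. \<eta> i \<ge> 0" "\<forall>w\<in>C \<inter> E. (z - (\<Sum>i\<in>I. \<eta> i *\<^sub>R m i)) \<bullet> w \<le> 0"
    using strict_mult[OF finI convex_Int[OF conv cE], of w1 m z] z0 w1C sI sJ H unfolding E_def by auto
  obtain \<gamma> where g: "\<forall>w\<in>C. (z - (\<Sum>i\<in>I. \<eta> i *\<^sub>R m i) - (\<Sum>j\<in>J. \<gamma> j *\<^sub>R m j)) \<bullet> w \<le> 0"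
    using sub_rule[OF finJ conv z0 ri sJ, of "z - (\<Sum>i\<in>I. \<eta> i *\<^sub>R m i)"] eta(2) unfolding E_def by auto
  show ?thesis
    by (rule exI[of _ "z - (\<Sum>i\<in>I. \<eta> i *\<^sub>R m i) - (\<Sum>j\<in>J. \<gamma> j *\<^sub>R m j)"], rule exI[of _ \<eta>],
        rule exI[of _ \<gamma>]) (use g eta(1) in simp)
qed

lemma move_ri:
  fixes C :: "'a::euclidean_space set" and m :: "'i \<Rightarrow> 'a"
  assumes conv: "convex C" and z0: "0 \<in> C" and finI: "finite I"
    and ri: "w1 \<in> rel_interior C" and d: "d \<in> span C"
    and H: "\<forall>i\<in>I. m i \<bullet> w1 < 0 \<or> (m i \<bullet> w1 = 0 \<and> m i \<bullet> d < 0)"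
  shows "\<exists>\<epsilon>>0. w1 + \<epsilon> *\<^sub>R d \<in> rel_interior C \<and> (\<forall>i\<in>I. m i \<bullet> (w1 + \<epsilon> *\<^sub>R d) < 0)"
proof -
  obtain e where e: "e > 0" "ball w1 e \<inter> affine hull C \<subseteq> C" using ri mem_rel_interior_ball by blast
  have ev1: "\<forall>\<^sub>F \<epsilon> in at_right (0::real). \<forall>i\<in>I. m i \<bullet> w1 + \<epsilon> * (m i \<bullet> d) < 0"
  proof (rule eventually_ball_finite[OF finI], intro ballI)
    fix i assume "i \<in> I"
    show "\<forall>\<^sub>F \<epsilon> in at_right (0::real). m i \<bullet> w1 + \<epsilon> * (m i \<bullet> d) < 0"
    proof (cases "m i \<bullet> w1 < 0")
      case True
      have "((\<lambda>\<epsilon>. m i \<bullet> w1 + \<epsilon> * (m i \<bullet> d)) \<longlongrightarrow> m i \<bullet> w1 + 0 * (m i \<bullet> d)) (at_right (0::real))"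
        by (intro tendsto_intros)
      thus ?thesis using True by (intro order_tendstoD(2)) auto
    next
      case False
      hence "m i \<bullet> w1 = 0" "m i \<bullet> d < 0" using H \<open>i \<in> I\<close> by auto
      have "\<forall>\<^sub>F \<epsilon> in at_right (0::real). 0 < \<epsilon>" by (rule eventually_at_right_less)
      thus ?thesis
      proof (rule eventually_mono)
        fix \<epsilon> :: real assume "0 < \<epsilon>"
        thus "m i \<bullet> w1 + \<epsilon> * (m i \<bullet> d) < 0" using \<open>m i \<bullet> w1 = 0\<close> \<open>m i \<bullet> d < 0\<close> by (simp add: mult_pos_neg)
      qed
    qed
  qed
  have "((\<lambda>\<epsilon>. \<epsilon> * norm d) \<longlongrightarrow> 0 * norm d) (at_right (0::real))" by (intro tendsto_intros)
  hence ev2: "\<forall>\<^sub>F \<epsilon> in at_right (0::real). \<epsilon> * norm d < e" using e(1) by (intro order_tendstoD(2)) auto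
  have "\<forall>\<^sub>F \<epsilon> in at_right (0::real). \<epsilon> > 0 \<and> \<epsilon> * norm d < e \<and> (\<forall>i\<in>I. m i \<bullet> w1 + \<epsilon> * (m i \<bullet> d) < 0)"
    using eventually_at_right_less[of "0::real"] ev1 ev2 by eventually_elim auto
  then obtain \<epsilon> where eps: "\<epsilon> > 0" "\<epsilon> * norm d < e" "\<forall>i\<in>I. m i \<bullet> w1 + \<epsilon> * (m i \<bullet> d) < 0"
    using eventually_happens[of _ "at_right (0::real)"] by (auto simp: trivial_limit_at_right_real)
  have aff: "affine hull C = span C" using z0 by (intro affine_hull_span_0) (simp add: hull_inc)
  have w1s: "w1 \<in> span C" using ri rel_interior_subset span_superset by blast
  have pa: "w1 + \<epsilon> *\<^sub>R d \<in> affine hull C" unfolding aff using w1s d by (simp add: span_add span_mul)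
  have dist: "dist w1 (w1 + \<epsilon> *\<^sub>R d) = \<epsilon> * norm d" using eps(1) by (simp add: dist_norm)
  have "w1 + \<epsilon> *\<^sub>R d \<in> rel_interior C"
    unfolding mem_rel_interior_ball
  proof (intro conjI exI[of _ "e - \<epsilon> * norm d"])
    show "w1 + \<epsilon> *\<^sub>R d \<in> C" using e(2) pa dist eps(2) by auto
    show "e - \<epsilon> * norm d > 0" using eps(2) by simp
    show "ball (w1 + \<epsilon> *\<^sub>R d) (e - \<epsilon> * norm d) \<inter> affine hull C \<subseteq> C"
    proof
      fix x assume x: "x \<in> ball (w1 + \<epsilon> *\<^sub>R d) (e - \<epsilon> * norm d) \<inter> affine hull C"
      have "dist w1 x \<le> dist w1 (w1 + \<epsilon> *\<^sub>R d) + dist (w1 + \<epsilon> *\<^sub>R d) x" by (rule dist_triangle)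
      hence "dist w1 x < e" using x dist by simp
      thus "x \<in> C" using e(2) x by auto
    qed
  qed
  moreover have "\<forall>i\<in>I. m i \<bullet> (w1 + \<epsilon> *\<^sub>R d) < 0" using eps(3) by (simp add: inner_add_right)
  ultimately show ?thesis using eps(1) by blast
qed

lemma hom_main:
  fixes C :: "'a::euclidean_space set" and m :: "'i \<Rightarrow> 'a"
  assumes conv: "convex C" and z0: "0 \<in> C"
  shows "\<forall>I J w1. card I = n \<longrightarrow> finite I \<longrightarrow> finite J \<longrightarrow> I \<inter> J = {} \<longrightarrow> w1 \<in> rel_interior C
     \<longrightarrow> (\<forall>i\<in>I. m i \<bullet> w1 \<le> 0) \<longrightarrow> (\<forall>j\<in>J. m j \<bullet> w1 = 0)
     \<longrightarrow> (\<forall>w\<in>C. (\<forall>i\<in>I. m i \<bullet> w \<le> 0) \<longrightarrow> (\<forall>j\<in>J. m j \<bullet> w = 0) \<longrightarrow> z \<bullet> w \<le> 0)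
     \<longrightarrow> (\<exists>a \<eta> \<gamma>. (\<forall>w\<in>C. a \<bullet> w \<le> 0) \<and> (\<forall>i\<in>I. \<eta> i \<ge> 0)
            \<and> z = a + (\<Sum>i\<in>I. \<eta> i *\<^sub>R m i) + (\<Sum>j\<in>J. \<gamma> j *\<^sub>R m j))"
proof (induction n rule: less_induct)
  case (less n)
  show ?case
  proof (intro allI impI)
    fix I J w1
    assume cI: "card I = n" and finI: "finite I" and finJ: "finite J" and dIJ: "I \<inter> J = {}"
      and ri: "w1 \<in> rel_interior C" and fI: "\<forall>i\<in>I. m i \<bullet> w1 \<le> 0" and fJ: "\<forall>j\<in>J. m j \<bullet> w1 = 0"
      and H: "\<forall>w\<in>C. (\<forall>i\<in>I. m i \<bullet> w \<le> 0) \<longrightarrow> (\<forall>j\<in>J. m j \<bullet> w = 0) \<longrightarrow> z \<bullet> w \<le> 0"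
    define T where "T = {i\<in>I. m i \<bullet> w1 = 0}"
    have finT: "finite T" unfolding T_def using finI by simp
    show "\<exists>a \<eta> \<gamma>. (\<forall>w\<in>C. a \<bullet> w \<le> 0) \<and> (\<forall>i\<in>I. \<eta> i \<ge> 0)
            \<and> z = a + (\<Sum>i\<in>I. \<eta> i *\<^sub>R m i) + (\<Sum>j\<in>J. \<gamma> j *\<^sub>R m j)"
    proof (cases "T = {}")
      case True
      hence "\<forall>i\<in>I. m i \<bullet> w1 < 0" using fI unfolding T_def by force
      thus ?thesis using strict_case[OF conv z0 finI finJ ri _ fJ H] by blast
    next
      case False
      from gordan[OF finT False finJ, of C m]
      show ?thesis
      proof
        assume "\<exists>d \<in> span C. (\<forall>j\<in>J. m j \<bullet> d = 0) \<and> (\<forall>i\<in>T. m i \<bullet> d < 0)"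
        then obtain d where d: "d \<in> span C" "\<forall>j\<in>J. m j \<bullet> d = 0" "\<forall>i\<in>T. m i \<bullet> d < 0" by blast
        have "\<forall>i\<in>I. m i \<bullet> w1 < 0 \<or> (m i \<bullet> w1 = 0 \<and> m i \<bullet> d < 0)"
          using fI d(3) unfolding T_def by force
        then obtain \<epsilon> where eps: "\<epsilon> > 0" "w1 + \<epsilon> *\<^sub>R d \<in> rel_interior C" "\<forall>i\<in>I. m i \<bullet> (w1 + \<epsilon> *\<^sub>R d) < 0"
          using move_ri[OF conv z0 finI ri d(1)] by blast
        have "\<forall>j\<in>J. m j \<bullet> (w1 + \<epsilon> *\<^sub>R d) = 0" using fJ d(2) by (simp add: inner_add_right)
        thus ?thesis using strict_case[OF conv z0 finI finJ eps(2) eps(3) _ H] by blast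
      next
        assume "\<exists>\<eta> \<rho> \<gamma>. (\<forall>i\<in>T. \<eta> i \<ge> 0) \<and> sum \<eta> T = 1 \<and> (\<forall>w\<in>C. \<rho> \<bullet> w = 0)
          \<and> (\<Sum>i\<in>T. \<eta> i *\<^sub>R m i) = \<rho> + (\<Sum>j\<in>J. \<gamma> j *\<^sub>R m j)"
        then obtain \<eta> \<rho> \<gamma> where G: "\<forall>i\<in>T. \<eta> i \<ge> 0" "sum \<eta> T = 1" "\<forall>w\<in>C. \<rho> \<bullet> w = 0"
          "(\<Sum>i\<in>T. \<eta> i *\<^sub>R m i) = \<rho> + (\<Sum>j\<in>J. \<gamma> j *\<^sub>R m j)" by blast
        define S where "S = {i\<in>T. \<eta> i > 0}"
        have ST: "S \<subseteq> T" and TI: "T \<subseteq> I" unfolding S_def T_def by auto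
        have finS: "finite S" using finT ST finite_subset by blast
        have neS: "S \<noteq> {}"
        proof
          assume "S = {}"
          hence "\<forall>i\<in>T. \<eta> i = 0" using G(1) unfolding S_def by force
          hence "sum \<eta> T = 0" by simp
          thus False using G(2) by simp
        qed
        have sumTS: "(\<Sum>i\<in>T. \<eta> i *\<^sub>R m i) = (\<Sum>i\<in>S. \<eta> i *\<^sub>R m i)"
          by (rule sum.mono_neutral_right[OF finT ST]) (use G(1) in \<open>auto simp: S_def\<close>)
        define I' where "I' = I - S"
        define J' where "J' = J \<union> S"
        have lt: "card I' < n" unfolding I'_def cI[symmetric]
          by (rule psubset_card_mono[OF finI]) (use ST TI neS in blast)
        have IJ': "finite I'" "finite J'" "I' \<inter> J' = {}" unfolding I'_def J'_def using finI finJ finS dIJ by auto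
        have fI': "\<forall>i\<in>I'. m i \<bullet> w1 \<le> 0" unfolding I'_def using fI by auto
        have fJ': "\<forall>j\<in>J'. m j \<bullet> w1 = 0" unfolding J'_def using fJ ST unfolding T_def by auto
        have H': "\<forall>w\<in>C. (\<forall>i\<in>I'. m i \<bullet> w \<le> 0) \<longrightarrow> (\<forall>j\<in>J'. m j \<bullet> w = 0) \<longrightarrow> z \<bullet> w \<le> 0"
        proof (intro ballI impI)
          fix w assume w: "w \<in> C" "\<forall>i\<in>I'. m i \<bullet> w \<le> 0" "\<forall>j\<in>J'. m j \<bullet> w = 0"
          have "\<forall>i\<in>I. m i \<bullet> w \<le> 0" using w(2,3) unfolding I'_def J'_def by force
          moreover have "\<forall>j\<in>J. m j \<bullet> w = 0" using w(3) unfolding J'_def by auto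
          ultimately show "z \<bullet> w \<le> 0" using H w(1) by blast
        qed
        obtain a \<eta>' \<gamma>' where R: "\<forall>w\<in>C. a \<bullet> w \<le> 0" "\<forall>i\<in>I'. \<eta>' i \<ge> 0"
          "z = a + (\<Sum>i\<in>I'. \<eta>' i *\<^sub>R m i) + (\<Sum>j\<in>J'. \<gamma>' j *\<^sub>R m j)"
        proof -
          note X = less.IH[OF lt, THEN spec[of _ I'], THEN spec[of _ J'], THEN spec[of _ w1]]
          show ?thesis using mp[OF mp[OF mp[OF mp[OF mp[OF mp[OF mp[OF mp[OF X refl] IJ'(1)] IJ'(2)] IJ'(3)] ri] fI'] fJ'] H'] that by blast
        qed
        define t where "t = (\<Sum>i\<in>S. \<bar>\<gamma>' i\<bar> / \<eta> i)"
        have etaS: "\<eta> i > 0" if "i \<in> S" for i using that unfolding S_def by auto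
        have tge: "\<bar>\<gamma>' i\<bar> \<le> t * \<eta> i" if "i \<in> S" for i
        proof -
          have "\<bar>\<gamma>' i\<bar> / \<eta> i \<le> t" unfolding t_def
            by (rule member_le_sum[OF that _ finS]) (use etaS in \<open>auto intro: divide_nonneg_pos\<close>)
          thus ?thesis using etaS[OF that] by (simp add: divide_le_eq)
        qed
        define \<eta>'' where "\<eta>'' = (\<lambda>i. if i \<in> S then \<gamma>' i + t * \<eta> i else \<eta>' i)"
        define \<gamma>'' where "\<gamma>'' = (\<lambda>j. \<gamma>' j - t * \<gamma> j)"
        have pos: "\<forall>i\<in>I. \<eta>'' i \<ge> 0"
        proof
          fix i assume "i \<in> I"
          show "\<eta>'' i \<ge> 0"
          proof (cases "i \<in> S")
            case True thus ?thesis using tge[OF True] unfolding \<eta>''_def by simp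
          next
            case False thus ?thesis using R(2) \<open>i \<in> I\<close> unfolding \<eta>''_def I'_def by simp
          qed
        qed
        have SI: "S \<subseteq> I" using ST TI by blast
        have dJS: "J \<inter> S = {}" using dIJ SI by blast
        have s1: "(\<Sum>i\<in>I. \<eta>'' i *\<^sub>R m i) = (\<Sum>i\<in>I'. \<eta>' i *\<^sub>R m i) + (\<Sum>i\<in>S. (\<gamma>' i + t * \<eta> i) *\<^sub>R m i)"
        proof -
          have "I = I' \<union> S" "I' \<inter> S = {}" unfolding I'_def using SI by auto
          hence "(\<Sum>i\<in>I. \<eta>'' i *\<^sub>R m i) = (\<Sum>i\<in>I'. \<eta>'' i *\<^sub>R m i) + (\<Sum>i\<in>S. \<eta>'' i *\<^sub>R m i)"
            using IJ'(1) finS by (metis sum.union_disjoint)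
          moreover have "(\<Sum>i\<in>I'. \<eta>'' i *\<^sub>R m i) = (\<Sum>i\<in>I'. \<eta>' i *\<^sub>R m i)"
            unfolding \<eta>''_def I'_def by (rule sum.cong) auto
          moreover have "(\<Sum>i\<in>S. \<eta>'' i *\<^sub>R m i) = (\<Sum>i\<in>S. (\<gamma>' i + t * \<eta> i) *\<^sub>R m i)"
            unfolding \<eta>''_def by (rule sum.cong) auto
          ultimately show ?thesis by simp
        qed
        have s2: "(\<Sum>j\<in>J'. \<gamma>' j *\<^sub>R m j) = (\<Sum>j\<in>J. \<gamma>' j *\<^sub>R m j) + (\<Sum>j\<in>S. \<gamma>' j *\<^sub>R m j)"
          unfolding J'_def using finJ finS dJS by (rule sum.union_disjoint)
        have s3: "(\<Sum>i\<in>S. (\<gamma>' i + t * \<eta> i) *\<^sub>R m i) = (\<Sum>i\<in>S. \<gamma>' i *\<^sub>R m i) + t *\<^sub>R (\<Sum>i\<in>S. \<eta> i *\<^sub>R m i)"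
          by (simp add: scaleR_add_left sum.distrib scaleR_sum_right)
        have s4: "(\<Sum>j\<in>J. \<gamma>'' j *\<^sub>R m j) = (\<Sum>j\<in>J. \<gamma>' j *\<^sub>R m j) - t *\<^sub>R (\<Sum>j\<in>J. \<gamma> j *\<^sub>R m j)"
          unfolding \<gamma>''_def by (simp add: scaleR_diff_left sum_subtractf scaleR_sum_right)
        have eq: "z = (a - t *\<^sub>R \<rho>) + (\<Sum>i\<in>I. \<eta>'' i *\<^sub>R m i) + (\<Sum>j\<in>J. \<gamma>'' j *\<^sub>R m j)"
          unfolding s1 s3 s4 R(3) s2 sumTS[symmetric] G(4) by (simp add: algebra_simps)
        have "\<forall>w\<in>C. (a - t *\<^sub>R \<rho>) \<bullet> w \<le> 0" using R(1) G(3) by (simp add: inner_diff_left)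
        thus ?thesis using pos eq by blast
      qed
    qed
  qed
qed

lemma gen_lemma:
  fixes C :: "'a::euclidean_space set" and ms :: "'k \<Rightarrow> 'a" and bs :: "'k \<Rightarrow> real"
  assumes conv: "convex C" and finK: "finite K" and w0: "w0 \<in> C" "\<forall>k\<in>K. ms k \<bullet> w0 \<le> bs k"
    and w1: "w1 \<in> rel_interior C" "\<forall>k\<in>K. ms k \<bullet> w1 \<le> bs k"
    and H: "\<forall>w\<in>C. (\<forall>k\<in>K. ms k \<bullet> w \<le> bs k) \<longrightarrow> z \<bullet> (w - w0) \<le> 0"
  shows "\<exists>a \<eta>. (\<forall>w\<in>C. a \<bullet> (w - w0) \<le> 0) \<and> (\<forall>k\<in>K. \<eta> k \<ge> 0 \<and> (ms k \<bullet> w0 < bs k \<longrightarrow> \<eta> k = 0))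
     \<and> z = a + (\<Sum>k\<in>K. \<eta> k *\<^sub>R ms k)"
proof -
  define C' where "C' = (\<lambda>x. (- w0) + x) ` C"
  have cC': "convex C'" unfolding C'_def using conv by (rule convex_translation)
  have z0: "0 \<in> C'" unfolding C'_def using w0(1) by force
  have ri': "(- w0) + w1 \<in> rel_interior C'" unfolding C'_def rel_interior_translation using w1(1) by blast
  define I where "I = {k\<in>K. ms k \<bullet> w0 = bs k}"
  have finI: "finite I" unfolding I_def using finK by simp
  have fI: "\<forall>i\<in>I. ms i \<bullet> ((- w0) + w1) \<le> 0" using w1(2) unfolding I_def by (auto simp: inner_add_right inner_diff_right)
  have H': "\<forall>w\<in>C'. (\<forall>i\<in>I. ms i \<bullet> w \<le> 0) \<longrightarrow> (\<forall>j\<in>{}. ms j \<bullet> w = 0) \<longrightarrow> z \<bullet> w \<le> 0"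
  proof (intro ballI impI)
    fix w' assume "w' \<in> C'" and act: "\<forall>i\<in>I. ms i \<bullet> w' \<le> 0"
    then obtain w where w: "w \<in> C" "w' = w - w0" unfolding C'_def by auto
    have ev: "\<forall>\<^sub>F \<theta> in at_right (0::real). \<forall>k\<in>K. ms k \<bullet> w0 + \<theta> * (ms k \<bullet> w') \<le> bs k"
    proof (rule eventually_ball_finite[OF finK], intro ballI)
      fix k assume "k \<in> K"
      show "\<forall>\<^sub>F \<theta> in at_right (0::real). ms k \<bullet> w0 + \<theta> * (ms k \<bullet> w') \<le> bs k"
      proof (cases "k \<in> I")
        case True
        have "\<forall>\<^sub>F \<theta> in at_right (0::real). 0 < \<theta>" by (rule eventually_at_right_less)
        thus ?thesis
        proof (rule eventually_mono)
          fix \<theta> :: real assume "0 < \<theta>"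
          thus "ms k \<bullet> w0 + \<theta> * (ms k \<bullet> w') \<le> bs k" using True act unfolding I_def
            by (simp add: mult_nonneg_nonpos)
        qed
      next
        case False
        hence lt: "ms k \<bullet> w0 < bs k" using w0(2) \<open>k \<in> K\<close> unfolding I_def by force
        have "((\<lambda>\<theta>. ms k \<bullet> w0 + \<theta> * (ms k \<bullet> w')) \<longlongrightarrow> ms k \<bullet> w0 + 0 * (ms k \<bullet> w')) (at_right (0::real))"
          by (intro tendsto_intros)
        hence "\<forall>\<^sub>F \<theta> in at_right (0::real). ms k \<bullet> w0 + \<theta> * (ms k \<bullet> w') < bs k"
          using lt by (intro order_tendstoD(2)) auto
        thus ?thesis by (rule eventually_mono) simp
      qed
    qed
    have "((\<lambda>\<theta>. \<theta>) \<longlongrightarrow> 0) (at_right (0::real))" by (rule tendsto_ident_at)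
    hence ev1: "\<forall>\<^sub>F \<theta> in at_right (0::real). \<theta> < 1" by (intro order_tendstoD(2)) auto
    have "\<forall>\<^sub>F \<theta> in at_right (0::real). 0 < \<theta> \<and> \<theta> < 1 \<and> (\<forall>k\<in>K. ms k \<bullet> w0 + \<theta> * (ms k \<bullet> w') \<le> bs k)"
      using eventually_at_right_less[of "0::real"] ev1 ev by eventually_elim auto
    then obtain \<theta> where th: "0 < \<theta>" "\<theta> < 1" "\<forall>k\<in>K. ms k \<bullet> w0 + \<theta> * (ms k \<bullet> w') \<le> bs k"
      using eventually_happens[of _ "at_right (0::real)"] by (auto simp: trivial_limit_at_right_real)
    have eqw: "w0 + \<theta> *\<^sub>R w' = (1 - \<theta>) *\<^sub>R w0 + \<theta> *\<^sub>R w" unfolding w(2) by (simp add: algebra_simps)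
    have inC: "w0 + \<theta> *\<^sub>R w' \<in> C" unfolding eqw using conv w0(1) w(1) th(1,2)
      unfolding convex_def by auto
    have "\<forall>k\<in>K. ms k \<bullet> (w0 + \<theta> *\<^sub>R w') \<le> bs k" using th(3) by (simp add: inner_add_right)
    hence "z \<bullet> ((w0 + \<theta> *\<^sub>R w') - w0) \<le> 0" using H inC by blast
    hence "\<theta> * (z \<bullet> w') \<le> 0" by simp
    thus "z \<bullet> w' \<le> 0" using th(1) by (simp add: mult_le_0_iff)
  qed
  obtain a \<eta> \<gamma> where R: "\<forall>w\<in>C'. a \<bullet> w \<le> 0" "\<forall>i\<in>I. \<eta> i \<ge> 0"
    "z = a + (\<Sum>i\<in>I. \<eta> i *\<^sub>R ms i) + (\<Sum>j\<in>{}. \<gamma> j *\<^sub>R ms j)"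
  proof -
    note X = hom_main[OF cC' z0, of "card I" ms z, THEN spec[of _ I], THEN spec[of _ "{}"], THEN spec[of _ "(- w0) + w1"]]
    show ?thesis using mp[OF mp[OF mp[OF mp[OF mp[OF mp[OF mp[OF mp[OF X refl] finI] finite.emptyI] _] ri'] fI] _] H'] that
      by auto
  qed
  define \<eta>' where "\<eta>' = (\<lambda>k. if k \<in> I then \<eta> k else 0)"
  have "(\<Sum>k\<in>K. \<eta>' k *\<^sub>R ms k) = (\<Sum>i\<in>I. \<eta> i *\<^sub>R ms i)"
  proof -
    have "(\<Sum>i\<in>I. \<eta> i *\<^sub>R ms i) = (\<Sum>k\<in>K. if ms k \<bullet> w0 = bs k then \<eta> k *\<^sub>R ms k else 0)"
      unfolding I_def using finK by (simp add: sum.inter_filter)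
    also have "\<dots> = (\<Sum>k\<in>K. \<eta>' k *\<^sub>R ms k)" unfolding \<eta>'_def I_def by (rule sum.cong) auto
    finally show ?thesis by simp
  qed
  moreover have "\<forall>w\<in>C. a \<bullet> (w - w0) \<le> 0" using R(1) unfolding C'_def by force
  moreover have "\<forall>k\<in>K. \<eta>' k \<ge> 0 \<and> (ms k \<bullet> w0 < bs k \<longrightarrow> \<eta>' k = 0)"
    using R(2) unfolding \<eta>'_def I_def by auto
  ultimately show ?thesis using R(3) by (intro exI[of _ a] exI[of _ \<eta>']) simp
qed


lemma epi_iff: "(x, t) \<in> epigraph_e f \<longleftrightarrow> f x \<le> ereal t"
  unfolding epigraph_e_def by simp

lemma epi_conv:
  assumes "convex (epigraph_e f)" "f x \<le> ereal s" "f y \<le> ereal t" "0 \<le> th" "th \<le> 1"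
  shows "f ((1 - th) *\<^sub>R x + th *\<^sub>R y) \<le> ereal ((1 - th) * s + th * t)"
proof -
  have "(x, s) \<in> epigraph_e f" "(y, t) \<in> epigraph_e f" using assms(2,3) by (simp_all add: epi_iff)
  hence "(1 - th) *\<^sub>R (x, s) + th *\<^sub>R (y, t) \<in> epigraph_e f"
    using assms(4,5) by (intro convexD[OF assms(1)]) auto
  thus ?thesis by (simp add: epi_iff)
qed

lemma poly_rep:
  fixes S :: "'a::euclidean_space set"
  assumes "polyhedron S"
  shows "\<exists>P. finite P \<and> S = {x. \<forall>q\<in>P. fst q \<bullet> x \<le> snd q}"
proof -
  obtain F where F: "finite F" "S = \<Inter> F" "\<forall>h\<in>F. \<exists>a b. a \<noteq> 0 \<and> h = {x. a \<bullet> x \<le> b}"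
    using assms unfolding polyhedron_def by blast
  have "\<forall>h\<in>F. \<exists>q. h = {x. fst q \<bullet> x \<le> snd q}" using F(3) by fastforce
  then obtain rep where rep: "\<forall>h\<in>F. h = {x. fst (rep h) \<bullet> x \<le> snd (rep h)}" by metis
  show ?thesis
  proof (intro exI[of _ "rep ` F"] conjI)
    show "finite (rep ` F)" using F(1) by simp
    show "S = {x. \<forall>q\<in>rep ` F. fst q \<bullet> x \<le> snd q}"
      unfolding F(2) using rep by blast
  qed
qed

lemma proper_fin:
  assumes "proper_fun f" "f x < \<infinity>"
  shows "f x = ereal (real_of_ereal (f x))"
  using assms unfolding proper_fun_def by (cases "f x") auto

lemma fst_epi:
  assumes "proper_fun f"
  shows "fst ` epigraph_e f = edom f"
proof
  show "fst ` epigraph_e f \<subseteq> edom f" unfolding edom_def epigraph_e_def by force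
  show "edom f \<subseteq> fst ` epigraph_e f"
  proof
    fix x assume "x \<in> edom f"
    hence "f x < \<infinity>" unfolding edom_def by simp
    hence "(x, real_of_ereal (f x)) \<in> epigraph_e f" using proper_fin[OF assms] by (simp add: epi_iff)
    thus "x \<in> fst ` epigraph_e f" by force
  qed
qed

lemma gmc:
  fixes A :: "real^'n^'m" and B :: "real^'n^'r"
  assumes cf: "convex (epigraph_e f)" and cg: "convex (epigraph_e g)"
    and fx: "f xs = ereal fx" and gx: "g (A *v xs) = ereal gx" and dpos: "\<delta> > 0"
    and loc: "\<forall>y\<in>ball xs \<delta>. (\<forall>i. (B *v xs - b) $ i = 0 \<longrightarrow> (B *v y - b) $ i \<le> 0)
               \<longrightarrow> ereal fx + ereal gx \<le> f y + g (A *v y)"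
    and x: "f x \<le> ereal s" "g (A *v x) \<le> ereal t" "\<forall>i. (B *v xs - b) $ i = 0 \<longrightarrow> (B *v x - b) $ i \<le> 0"
  shows "fx + gx \<le> s + t"
proof (rule ccontr)
  assume "\<not> fx + gx \<le> s + t"
  hence lt: "s + t < fx + gx" by simp
  define th where "th = min (1/2) (\<delta> / (2 * (norm (x - xs) + 1)))"
  have th: "0 < th" "th < 1" "th * norm (x - xs) < \<delta>"
  proof -
    have "0 < 2 * (norm (x - xs) + 1)" by (simp add: add_nonneg_pos)
    thus "0 < th" unfolding th_def using dpos by simp
    show "th < 1" unfolding th_def by simp
    have pos: "0 < 2 * (norm (x - xs) + 1)" by (simp add: add_nonneg_pos)
    have "th \<le> \<delta> / (2 * (norm (x - xs) + 1))" unfolding th_def by simp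
    hence A: "th * (2 * (norm (x - xs) + 1)) \<le> \<delta>" using pos by (simp add: pos_le_divide_eq)
    have "0 < th" unfolding th_def using dpos pos by simp
    hence "th * norm (x - xs) < th * (2 * (norm (x - xs) + 1))"
      by (intro mult_strict_left_mono) (auto intro: add_nonneg_pos)
    thus "th * norm (x - xs) < \<delta>" using A by linarith
  qed
  define xt where "xt = (1 - th) *\<^sub>R xs + th *\<^sub>R x"
  have "dist xs xt = th * norm (x - xs)"
    unfolding xt_def dist_norm using th(1)
    by (simp add: algebra_simps norm_minus_commute flip: scaleR_diff_right)
  hence inb: "xt \<in> ball xs \<delta>" using th(3) by (simp add: mem_ball)
  have Bt: "B *v xt - b = (1 - th) *\<^sub>R (B *v xs - b) + th *\<^sub>R (B *v x - b)"
    unfolding xt_def by (simp add: matrix_vector_right_distrib matrix_vector_mult_scaleR algebra_simps)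
  have feas: "\<forall>i. (B *v xs - b) $ i = 0 \<longrightarrow> (B *v xt - b) $ i \<le> 0"
    using x(3) th(1) unfolding Bt by (simp add: mult_nonneg_nonpos)
  have At: "A *v xt = (1 - th) *\<^sub>R (A *v xs) + th *\<^sub>R (A *v x)"
    unfolding xt_def by (simp add: matrix_vector_right_distrib matrix_vector_mult_scaleR)
  have f1: "f xt \<le> ereal ((1 - th) * fx + th * s)"
    unfolding xt_def using epi_conv[OF cf _ x(1), of xs fx th] fx th by simp
  have g1: "g (A *v xt) \<le> ereal ((1 - th) * gx + th * t)"
    unfolding At using epi_conv[OF cg _ x(2), of "A *v xs" gx th] gx th by simp
  have "ereal fx + ereal gx \<le> f xt + g (A *v xt)" using loc inb feas by blast
  also have "\<dots> \<le> ereal ((1 - th) * fx + th * s) + ereal ((1 - th) * gx + th * t)"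
    using f1 g1 by (rule add_mono)
  finally have "fx + gx \<le> (1 - th) * fx + th * s + ((1 - th) * gx + th * t)" by simp
  hence "th * (fx + gx) \<le> th * (s + t)" by (simp add: algebra_simps)
  hence "fx + gx \<le> s + t" using th(1) by simp
  thus False using lt by simp
qed

lemma Bcont:
  fixes B :: "real^'n^'r"
  shows "((\<lambda>y. (B *v y - b) $ i) \<longlongrightarrow> (B *v xs - b) $ i) (at xs)"
proof -
  have "((\<lambda>y. (\<Sum>k\<in>UNIV. B $ i $ k * y $ k) - b $ i) \<longlongrightarrow> (\<Sum>k\<in>UNIV. B $ i $ k * xs $ k) - b $ i) (at xs)"
    by (intro tendsto_intros)
  thus ?thesis by (simp add: matrix_vector_mult_def)
qed

lemma loc_lemma:
  fixes f :: "real^'n \<Rightarrow> ereal" and g :: "real^'m \<Rightarrow> ereal"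
    and A :: "real^'n^'m" and B :: "real^'n^'r" and b lam :: "real^'r"
  assumes lm: "local_minimizer (Fobj f g A B b lam) xs"
    and fx: "f xs = ereal fx" and gx: "g (A *v xs) = ereal gx"
  shows "\<exists>\<delta>>0. \<forall>y\<in>ball xs \<delta>. (\<forall>i. (B *v xs - b) $ i = 0 \<longrightarrow> (B *v y - b) $ i \<le> 0)
               \<longrightarrow> ereal fx + ereal gx \<le> f y + g (A *v y)"
proof -
  obtain e where e: "e > 0" "\<forall>y\<in>ball xs e. Fobj f g A B b lam xs \<le> Fobj f g A B b lam y"
    using lm unfolding local_minimizer_def by blast
  have "\<forall>\<^sub>F y in at xs. \<forall>i. (B *v xs - b) $ i \<noteq> 0 \<longrightarrow> ((B *v y - b) $ i > 0 \<longleftrightarrow> (B *v xs - b) $ i > 0)"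
  proof (rule eventually_all_finite)
    fix i
    show "\<forall>\<^sub>F y in at xs. (B *v xs - b) $ i \<noteq> 0 \<longrightarrow> ((B *v y - b) $ i > 0 \<longleftrightarrow> (B *v xs - b) $ i > 0)"
    proof (cases "(B *v xs - b) $ i > 0")
      case True
      have "\<forall>\<^sub>F y in at xs. (B *v y - b) $ i > 0" using order_tendstoD(1)[OF Bcont True] .
      thus ?thesis by (rule eventually_mono) (use True in auto)
    next
      case False
      show ?thesis
      proof (cases "(B *v xs - b) $ i = 0")
        case True thus ?thesis by simp
      next
        case F2: False
        hence "(B *v xs - b) $ i < 0" using False by simp
        have "\<forall>\<^sub>F y in at xs. (B *v y - b) $ i < 0" using order_tendstoD(2)[OF Bcont \<open>(B *v xs - b) $ i < 0\<close>] .
        thus ?thesis by (rule eventually_mono) (use False in auto)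
      qed
    qed
  qed
  then obtain d where d: "d > 0" "\<forall>y. y \<noteq> xs \<and> dist y xs < d \<longrightarrow>
      (\<forall>i. (B *v xs - b) $ i \<noteq> 0 \<longrightarrow> ((B *v y - b) $ i > 0 \<longleftrightarrow> (B *v xs - b) $ i > 0))"
    unfolding eventually_at by auto
  show ?thesis
  proof (intro exI[of _ "min e d"] conjI ballI impI)
    show "min e d > 0" using e d by simp
    fix y assume y: "y \<in> ball xs (min e d)" and feas: "\<forall>i. (B *v xs - b) $ i = 0 \<longrightarrow> (B *v y - b) $ i \<le> 0"
    have same: "((B *v y - b) $ i > 0) \<longleftrightarrow> ((B *v xs - b) $ i > 0)" for i
    proof (cases "y = xs")
      case True thus ?thesis by simp
    next
      case False
      hence "dist y xs < d" using y by (simp add: dist_commute)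
      thus ?thesis using d(2) False feas[rule_format, of i] by fastforce
    qed
    have Phi: "Phi_plus lam (B *v y - b) = Phi_plus lam (B *v xs - b)"
      unfolding Phi_plus_def using same by simp
    have "Fobj f g A B b lam xs \<le> Fobj f g A B b lam y" using e(2) y by simp
    hence "ereal fx + ereal gx + ereal (Phi_plus lam (B *v xs - b)) \<le> f y + g (A *v y) + ereal (Phi_plus lam (B *v xs - b))"
      unfolding Fobj_def Phi fx gx .
    thus "ereal fx + ereal gx \<le> f y + g (A *v y)"
      using ereal_add_le_add_iff2[of "ereal fx + ereal gx" "ereal (Phi_plus lam (B *v xs - b))" "f y + g (A *v y)"]
      by (simp del: plus_ereal.simps)
  qed
qed

lemma mv_row: "((M::real^'n^'m) *v x) $ i = (M $ i) \<bullet> x"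
  by (simp add: matrix_vector_mult_def inner_vec_def)

lemma tr_inner: "(transpose (M::real^'n^'m) *v v) \<bullet> d = v \<bullet> (M *v d)"
  by (simp add: dot_lmul_matrix)

lemma vec_inner_sum: "(x::real^'n) \<bullet> y = (\<Sum>i\<in>UNIV. x $ i * y $ i)"
  by (simp add: inner_vec_def)

lemma bool_sum:
  fixes h :: "'j::finite \<times> bool \<Rightarrow> real"
  shows "(\<Sum>q\<in>UNIV. h q * ((if snd q then 1 else -1) * c (fst q))) = (\<Sum>j\<in>UNIV. (h (j,True) - h (j,False)) * c j)"
proof -
  have "(\<Sum>q\<in>UNIV. h q * ((if snd q then 1 else -1) * c (fst q)))
      = (\<Sum>q\<in>(UNIV::'j set) \<times> (UNIV::bool set). h q * ((if snd q then 1 else -1) * c (fst q)))"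
    by simp
  also have "\<dots> = (\<Sum>j\<in>UNIV. \<Sum>sg\<in>UNIV. h (j,sg) * ((if sg then 1 else -1) * c j))"
    by (subst sum.cartesian_product) (simp add: case_prod_beta)
  also have "\<dots> = (\<Sum>j\<in>UNIV. (h (j,True) - h (j,False)) * c j)"
    by (rule sum.cong) (auto simp: UNIV_bool algebra_simps)
  finally show ?thesis .
qed

lemma ri_epi_point:
  fixes f :: "'a::euclidean_space \<Rightarrow> ereal"
  assumes "proper_fun f" "convex_fun f" "x1 \<in> rel_interior (edom f)"
  shows "\<exists>s1. (x1, s1) \<in> rel_interior (epigraph_e f)"
proof -
  have "rel_interior (edom f) = fst ` rel_interior (epigraph_e f)"
    using rel_interior_convex_linear_image[OF linear_fst, of "epigraph_e f"] assms(2)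
    unfolding convex_fun_def fst_epi[OF assms(1)] by simp
  thus ?thesis using assms(3) by force
qed


lemma part2:
  fixes f :: "real^'n \<Rightarrow> ereal" and g :: "real^'m \<Rightarrow> ereal"
    and A :: "real^'n^'m" and B :: "real^'n^'r" and b lam :: "real^'r"
  assumes fp: "proper_fun f" and fc: "convex_fun f" and gp: "proper_fun g" and gc: "convex_fun g"
    and lm: "local_minimizer (Fobj f g A B b lam) xs" and Fin: "Fobj f g A B b lam xs < \<infinity>"
    and x1f: "x1 \<in> rel_interior (edom f) \<or> (polyhedral_fun f \<and> x1 \<in> edom f)"
    and x1g: "A *v x1 \<in> rel_interior (edom g) \<or> (polyhedral_fun g \<and> A *v x1 \<in> edom g)"
    and x1b: "\<forall>i. (B *v xs - b) $ i = 0 \<longrightarrow> (B *v x1 - b) $ i \<le> 0"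
  shows "stationary f g A B b xs"
proof -
  have fnm: "f x \<noteq> -\<infinity>" for x using fp unfolding proper_fun_def by blast
  have gnm: "g y \<noteq> -\<infinity>" for y using gp unfolding proper_fun_def by blast
  have fxs: "f xs < \<infinity>"
  proof (rule ccontr)
    assume "\<not> f xs < \<infinity>" hence "f xs = \<infinity>" by simp
    hence "Fobj f g A B b lam xs = \<infinity>" unfolding Fobj_def using gnm[of "A *v xs"] by simp
    thus False using Fin by simp
  qed
  have gxs: "g (A *v xs) < \<infinity>"
  proof (rule ccontr)
    assume "\<not> g (A *v xs) < \<infinity>" hence "g (A *v xs) = \<infinity>" by simp
    hence "Fobj f g A B b lam xs = \<infinity>" unfolding Fobj_def using fnm[of xs] by simp
    thus False using Fin by simp
  qed
  define fx where "fx = real_of_ereal (f xs)"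
  define gx where "gx = real_of_ereal (g (A *v xs))"
  have fx: "f xs = ereal fx" unfolding fx_def using proper_fin[OF fp fxs] .
  have gx: "g (A *v xs) = ereal gx" unfolding gx_def using proper_fin[OF gp gxs] .
  obtain \<delta> where dl: "\<delta> > 0" "\<forall>y\<in>ball xs \<delta>. (\<forall>i. (B *v xs - b) $ i = 0 \<longrightarrow> (B *v y - b) $ i \<le> 0)
               \<longrightarrow> ereal fx + ereal gx \<le> f y + g (A *v y)"
    using loc_lemma[OF lm fx gx] by blast
  have cf: "convex (epigraph_e f)" using fc unfolding convex_fun_def .
  have cg: "convex (epigraph_e g)" using gc unfolding convex_fun_def .
  define fP where "fP \<longleftrightarrow> polyhedral_fun f \<and> x1 \<in> edom f"
  define gP where "gP \<longleftrightarrow> polyhedral_fun g \<and> A *v x1 \<in> edom g"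
  obtain Pf where Pf: "finite Pf" "\<forall>q\<in>Pf. \<forall>p\<in>epigraph_e f. fst q \<bullet> p \<le> snd q"
    "fP \<longrightarrow> epigraph_e f = {p. \<forall>q\<in>Pf. fst q \<bullet> p \<le> snd q}"
  proof (cases fP)
    case True
    then obtain P where "finite P" "epigraph_e f = {p. \<forall>q\<in>P. fst q \<bullet> p \<le> snd q}"
      using poly_rep unfolding fP_def polyhedral_fun_def by blast
    thus ?thesis using that[of P] by auto
  next
    case False thus ?thesis using that[of "{}"] by auto
  qed
  obtain Pg where Pg: "finite Pg" "\<forall>q\<in>Pg. \<forall>p\<in>epigraph_e g. fst q \<bullet> p \<le> snd q"
    "gP \<longrightarrow> epigraph_e g = {p. \<forall>q\<in>Pg. fst q \<bullet> p \<le> snd q}"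
  proof (cases gP)
    case True
    then obtain P where "finite P" "epigraph_e g = {p. \<forall>q\<in>P. fst q \<bullet> p \<le> snd q}"
      using poly_rep unfolding gP_def polyhedral_fun_def by blast
    thus ?thesis using that[of P] by auto
  next
    case False thus ?thesis using that[of "{}"] by auto
  qed
  define Cf where "Cf = (if fP then UNIV else epigraph_e f)"
  define Cg where "Cg = (if gP then UNIV else epigraph_e g)"
  obtain s1 where s1: "(x1, s1) \<in> rel_interior Cf" "(x1, s1) \<in> epigraph_e f"
  proof (cases fP)
    case True
    hence "f x1 < \<infinity>" unfolding fP_def edom_def by simp
    hence "(x1, real_of_ereal (f x1)) \<in> epigraph_e f" using proper_fin[OF fp] by (simp add: epi_iff)
    thus ?thesis using that True unfolding Cf_def by simp
  next
    case False
    hence "x1 \<in> rel_interior (edom f)" using x1f unfolding fP_def by blast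
    then obtain s where "(x1, s) \<in> rel_interior (epigraph_e f)" using ri_epi_point[OF fp fc] by blast
    thus ?thesis using that False rel_interior_subset unfolding Cf_def by auto
  qed
  obtain t1 where t1: "(A *v x1, t1) \<in> rel_interior Cg" "(A *v x1, t1) \<in> epigraph_e g"
  proof (cases gP)
    case True
    hence "g (A *v x1) < \<infinity>" unfolding gP_def edom_def by simp
    hence "(A *v x1, real_of_ereal (g (A *v x1))) \<in> epigraph_e g" using proper_fin[OF gp] by (simp add: epi_iff)
    thus ?thesis using that True unfolding Cg_def by simp
  next
    case False
    hence "A *v x1 \<in> rel_interior (edom g)" using x1g unfolding gP_def by blast
    then obtain s where "(A *v x1, s) \<in> rel_interior (epigraph_e g)" using ri_epi_point[OF gp gc] by blast
    thus ?thesis using that False rel_interior_subset unfolding Cg_def by auto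
  qed
  have epiCf: "epigraph_e f \<subseteq> Cf" unfolding Cf_def by auto
  have epiCg: "epigraph_e g \<subseteq> Cg" unfolding Cg_def by auto
  have cCf: "convex Cf" unfolding Cf_def using cf by simp
  have cCg: "convex Cg" unfolding Cg_def using cg by simp
  define C where "C = Cf \<times> Cg"
  have cC: "convex C" unfolding C_def using cCf cCg by (rule convex_Times)
  define I0 where "I0 = {i. (B *v xs - b) $ i = 0}"
  have finI0: "finite I0" by simp
  define cj :: "'m \<Rightarrow> ((real^'n) \<times> real) \<times> ((real^'m) \<times> real)"
    where "cj = (\<lambda>j. ((- (A $ j), 0), (axis j 1, 0)))"
  have cj_in: "cj j \<bullet> p = (fst (snd p) - A *v fst (fst p)) $ j" for j p
    unfolding cj_def by (simp add: inner_prod_def inner_axis' mv_row)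
  define ms :: "((((real^'n) \<times> real) \<times> real) + (((real^'m) \<times> real) \<times> real)) + (('m \<times> bool) + 'r)
      \<Rightarrow> ((real^'n) \<times> real) \<times> ((real^'m) \<times> real)"
    where "ms = case_sum (case_sum (\<lambda>q. (fst q, 0)) (\<lambda>q. (0, fst q)))
                 (case_sum (\<lambda>q. (if snd q then 1 else -1) *\<^sub>R cj (fst q)) (\<lambda>i. ((B $ i, 0), 0)))"
  define bs :: "((((real^'n) \<times> real) \<times> real) + (((real^'m) \<times> real) \<times> real)) + (('m \<times> bool) + 'r) \<Rightarrow> real"
    where "bs = case_sum (case_sum snd snd) (case_sum (\<lambda>_. 0) (\<lambda>i. b $ i))"
  define K where "K = (Pf <+> Pg) <+> ((UNIV :: ('m \<times> bool) set) <+> I0)"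
  have finK: "finite K" unfolding K_def using Pf(1) Pg(1) finI0 by (simp add: finite_Plus)
  have ball_K: "(\<forall>k\<in>K. P k) \<longleftrightarrow> (\<forall>q\<in>Pf. P (Inl (Inl q))) \<and> (\<forall>q\<in>Pg. P (Inl (Inr q)))
      \<and> (\<forall>q. P (Inr (Inl q))) \<and> (\<forall>i\<in>I0. P (Inr (Inr i)))" for P
    unfolding K_def Plus_def by blast
  have ms1: "ms (Inl (Inl q)) \<bullet> p = fst q \<bullet> fst p" for q p unfolding ms_def by (simp add: inner_prod_def)
  have ms2: "ms (Inl (Inr q)) \<bullet> p = fst q \<bullet> snd p" for q p unfolding ms_def by (simp add: inner_prod_def)
  have ms3: "ms (Inr (Inl q)) \<bullet> p = (if snd q then 1 else -1) * (cj (fst q) \<bullet> p)" for q p unfolding ms_def by simp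
  have ms4: "ms (Inr (Inr i)) \<bullet> p = (B $ i) \<bullet> fst (fst p)" for i p unfolding ms_def by (simp add: inner_prod_def)
  have Kfeas: "(\<forall>k\<in>K. ms k \<bullet> p \<le> bs k) \<longleftrightarrow>
      (\<forall>q\<in>Pf. fst q \<bullet> fst p \<le> snd q) \<and> (\<forall>q\<in>Pg. fst q \<bullet> snd p \<le> snd q)
      \<and> (\<forall>j. cj j \<bullet> p = 0) \<and> (\<forall>i\<in>I0. (B $ i) \<bullet> fst (fst p) \<le> b $ i)" for p
  proof -
    have "(\<forall>q\<in>(UNIV::('m \<times> bool) set). (if snd q then 1 else -1) * (cj (fst q) \<bullet> p) \<le> 0) \<longleftrightarrow> (\<forall>j. cj j \<bullet> p = 0)"
    proof
      assume H: "\<forall>q\<in>(UNIV::('m \<times> bool) set). (if snd q then 1 else -1) * (cj (fst q) \<bullet> p) \<le> 0"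
      show "\<forall>j. cj j \<bullet> p = 0"
      proof
        fix j
        have "cj j \<bullet> p \<le> 0" using H[rule_format, of "(j, True)"] by simp
        moreover have "- (cj j \<bullet> p) \<le> 0" using H[rule_format, of "(j, False)"] by simp
        ultimately show "cj j \<bullet> p = 0" by simp
      qed
    qed auto
    thus ?thesis unfolding ball_K bs_def ms1 ms2 ms3 ms4 by simp
  qed
  have split: "(\<Sum>k\<in>K. \<eta> k * (ms k \<bullet> p)) =
      (\<Sum>q\<in>Pf. \<eta> (Inl (Inl q)) * (fst q \<bullet> fst p)) + (\<Sum>q\<in>Pg. \<eta> (Inl (Inr q)) * (fst q \<bullet> snd p))
      + (\<Sum>j\<in>UNIV. (\<eta> (Inr (Inl (j,True))) - \<eta> (Inr (Inl (j,False)))) * (cj j \<bullet> p))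
      + (\<Sum>i\<in>I0. \<eta> (Inr (Inr i)) * ((B $ i) \<bullet> fst (fst p)))" for \<eta> p
  proof -
    have "(\<Sum>k\<in>K. \<eta> k * (ms k \<bullet> p)) =
      (\<Sum>q\<in>Pf. \<eta> (Inl (Inl q)) * (ms (Inl (Inl q)) \<bullet> p)) + (\<Sum>q\<in>Pg. \<eta> (Inl (Inr q)) * (ms (Inl (Inr q)) \<bullet> p))
      + ((\<Sum>q\<in>UNIV. \<eta> (Inr (Inl q)) * (ms (Inr (Inl q)) \<bullet> p))
      + (\<Sum>i\<in>I0. \<eta> (Inr (Inr i)) * (ms (Inr (Inr i)) \<bullet> p)))"
      unfolding K_def using Pf(1) Pg(1) finI0 by (simp add: sum.Plus finite_Plus o_def)
    thus ?thesis unfolding ms1 ms2 ms3 ms4 using bool_sum[of "\<lambda>q. \<eta> (Inr (Inl q))" "\<lambda>j. cj j \<bullet> p"]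
      by (simp add: add.assoc)
  qed
  have memK: "q \<in> Pf \<Longrightarrow> Inl (Inl q) \<in> K" "q' \<in> Pg \<Longrightarrow> Inl (Inr q') \<in> K" "i \<in> I0 \<Longrightarrow> Inr (Inr i) \<in> K"
    for q q' i unfolding K_def by auto
  define w0 where "w0 = ((xs, fx), (A *v xs, gx))"
  define w1 where "w1 = ((x1, s1), (A *v x1, t1))"
  define z :: "((real^'n) \<times> real) \<times> ((real^'m) \<times> real)" where "z = ((0, -1), (0, -1))"
  have xs_epi: "(xs, fx) \<in> epigraph_e f" using fx by (simp add: epi_iff)
  have Axs_epi: "(A *v xs, gx) \<in> epigraph_e g" using gx by (simp add: epi_iff)
  have w0C: "w0 \<in> C" unfolding w0_def C_def using xs_epi Axs_epi epiCf epiCg by auto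
  have w0K: "\<forall>k\<in>K. ms k \<bullet> w0 \<le> bs k"
    unfolding Kfeas using Pf(2) Pg(2) xs_epi Axs_epi
    by (auto simp: w0_def cj_in I0_def mv_row[symmetric])
  have w1ri: "w1 \<in> rel_interior C" unfolding C_def rel_interior_Times[OF cCf cCg] w1_def using s1 t1 by simp
  have w1K: "\<forall>k\<in>K. ms k \<bullet> w1 \<le> bs k"
    unfolding Kfeas using Pf(2) Pg(2) s1(2) t1(2) x1b
    by (auto simp: w1_def cj_in I0_def mv_row[symmetric])
  have H: "\<forall>w\<in>C. (\<forall>k\<in>K. ms k \<bullet> w \<le> bs k) \<longrightarrow> z \<bullet> (w - w0) \<le> 0"
  proof (intro ballI impI)
    fix w assume wC: "w \<in> C" and wK: "\<forall>k\<in>K. ms k \<bullet> w \<le> bs k"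
    obtain x s y t where w: "w = ((x, s), (y, t))" by (metis prod.collapse)
    have fe: "\<forall>q\<in>Pf. fst q \<bullet> (x, s) \<le> snd q" "\<forall>q\<in>Pg. fst q \<bullet> (y, t) \<le> snd q"
      "\<forall>j. (y - A *v x) $ j = 0" "\<forall>i\<in>I0. (B $ i) \<bullet> x \<le> b $ i"
      using wK unfolding Kfeas w by (auto simp: cj_in)
    have yAx: "y = A *v x" using fe(3) by (simp add: vec_eq_iff)
    have xe: "(x, s) \<in> epigraph_e f"
    proof (cases fP)
      case True thus ?thesis using Pf(3) fe(1) by auto
    next
      case False thus ?thesis using wC unfolding C_def Cf_def w by simp
    qed
    have ye: "(y, t) \<in> epigraph_e g"
    proof (cases gP)
      case True thus ?thesis using Pg(3) fe(2) by auto
    next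
      case False thus ?thesis using wC unfolding C_def Cg_def w by simp
    qed
    have Bf: "\<forall>i. (B *v xs - b) $ i = 0 \<longrightarrow> (B *v x - b) $ i \<le> 0"
      using fe(4) unfolding I0_def by (simp add: mv_row)
    have "fx + gx \<le> s + t"
      using gmc[OF cf cg fx gx dl(1) dl(2), of x s t] xe ye Bf yAx by (simp add: epi_iff)
    thus "z \<bullet> (w - w0) \<le> 0" unfolding z_def w w0_def by simp
  qed
  obtain a \<eta> where R: "\<forall>w\<in>C. a \<bullet> (w - w0) \<le> 0" "\<forall>k\<in>K. \<eta> k \<ge> 0 \<and> (ms k \<bullet> w0 < bs k \<longrightarrow> \<eta> k = 0)"
    "z = a + (\<Sum>k\<in>K. \<eta> k *\<^sub>R ms k)"
    using gen_lemma[OF cC finK w0C w0K w1ri w1K H] by blast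
  have key: "z \<bullet> p = a \<bullet> p + (\<Sum>k\<in>K. \<eta> k * (ms k \<bullet> p))" for p
    by (subst R(3)) (simp add: inner_add_left inner_sum_left)
  define \<zeta> :: "real^'m" where "\<zeta> = (\<chi> j. \<eta> (Inr (Inl (j,True))) - \<eta> (Inr (Inl (j,False))))"
  define zz :: "real^'r" where "zz = (\<chi> i. if i \<in> I0 then \<eta> (Inr (Inr i)) else 0)"
  define v where "v = - \<zeta>"
  define u where "u = - (transpose A *v v + transpose B *v zz)"
  have csum: "(\<Sum>j\<in>UNIV. (\<eta> (Inr (Inl (j,True))) - \<eta> (Inr (Inl (j,False)))) * (cj j \<bullet> p))
      = \<zeta> \<bullet> (fst (snd p) - A *v fst (fst p))" for p
    unfolding vec_inner_sum \<zeta>_def cj_in by simp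
  have bsum: "(\<Sum>i\<in>I0. \<eta> (Inr (Inr i)) * ((B $ i) \<bullet> d)) = zz \<bullet> (B *v d)" for d
  proof -
    have "zz \<bullet> (B *v d) = (\<Sum>i\<in>UNIV. if i \<in> I0 then \<eta> (Inr (Inr i)) * ((B $ i) \<bullet> d) else 0)"
      unfolding vec_inner_sum zz_def mv_row by (intro sum.cong) auto
    also have "\<dots> = (\<Sum>i\<in>I0. \<eta> (Inr (Inr i)) * ((B $ i) \<bullet> d))"
      using sum.inter_filter[of UNIV "\<lambda>i. \<eta> (Inr (Inr i)) * ((B $ i) \<bullet> d)" "\<lambda>i. i \<in> I0"] by simp
    finally show ?thesis by simp
  qed
  have act: "\<eta> k * (ms k \<bullet> p' - ms k \<bullet> w0) \<le> 0" if "k \<in> K" "ms k \<bullet> p' \<le> bs k" for k p'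
  proof (cases "\<eta> k = 0")
    case False
    hence "ms k \<bullet> w0 \<ge> bs k" using R(2) that(1) by force
    thus ?thesis using R(2) that by (intro mult_nonneg_nonpos) auto
  qed simp
  have act2: "\<eta> k * (ms k \<bullet> p) \<le> 0" if "k \<in> K" "ms k \<bullet> (w0 + p) \<le> bs k" for k p
    using act[OF that] by (simp add: inner_add_right)
  have uform: "u \<bullet> d = \<zeta> \<bullet> (A *v d) - zz \<bullet> (B *v d)" for d
    unfolding u_def v_def by (simp only: inner_minus_left inner_add_left tr_inner)
  have test1: "u \<bullet> (y - xs) \<le> s - fx" if ye: "(y, s) \<in> epigraph_e f" for y s
  proof -
    define p :: "((real^'n) \<times> real) \<times> ((real^'m) \<times> real)" where "p = ((y - xs, s - fx), (0, 0))"
    have wp: "w0 + p = ((y, s), (A *v xs, gx))" unfolding w0_def p_def by simp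
    have "w0 + p \<in> C" unfolding wp C_def using ye epiCf Axs_epi epiCg by auto
    hence ap: "a \<bullet> p \<le> 0" using R(1) by force
    have pf: "(\<Sum>q\<in>Pf. \<eta> (Inl (Inl q)) * (fst q \<bullet> fst p)) \<le> 0"
    proof (rule sum_nonpos)
      fix q assume q: "q \<in> Pf"
      have "ms (Inl (Inl q)) \<bullet> (w0 + p) \<le> bs (Inl (Inl q))"
        unfolding wp ms1 bs_def using Pf(2) q ye by simp
      thus "\<eta> (Inl (Inl q)) * (fst q \<bullet> fst p) \<le> 0" using act2[OF memK(1)[OF q]] ms1 by simp
    qed
    have pg: "(\<Sum>q\<in>Pg. \<eta> (Inl (Inr q)) * (fst q \<bullet> snd p)) = 0" unfolding p_def by (simp add: inner_prod_def)
    have "z \<bullet> p = a \<bullet> p + (\<Sum>k\<in>K. \<eta> k * (ms k \<bullet> p))" by (rule key)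
    also have "\<dots> = a \<bullet> p + (\<Sum>q\<in>Pf. \<eta> (Inl (Inl q)) * (fst q \<bullet> fst p)) + 0
        + \<zeta> \<bullet> (0 - A *v (y - xs)) + zz \<bullet> (B *v (y - xs))"
      unfolding split csum bsum pg by (simp add: p_def)
    finally have "- (s - fx) \<le> 0 + 0 - \<zeta> \<bullet> (A *v (y - xs)) + zz \<bullet> (B *v (y - xs))"
      using ap pf by (simp add: z_def p_def)
    thus ?thesis using uform[of "y - xs"] by simp
  qed
  have test2: "v \<bullet> (y - A *v xs) \<le> t - gx" if ye: "(y, t) \<in> epigraph_e g" for y t
  proof -
    define p :: "((real^'n) \<times> real) \<times> ((real^'m) \<times> real)" where "p = ((0, 0), (y - A *v xs, t - gx))"
    have wp: "w0 + p = ((xs, fx), (y, t))" unfolding w0_def p_def by simp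
    have "w0 + p \<in> C" unfolding wp C_def using ye epiCf xs_epi epiCg by auto
    hence ap: "a \<bullet> p \<le> 0" using R(1) by force
    have pg: "(\<Sum>q\<in>Pg. \<eta> (Inl (Inr q)) * (fst q \<bullet> snd p)) \<le> 0"
    proof (rule sum_nonpos)
      fix q assume q: "q \<in> Pg"
      have "ms (Inl (Inr q)) \<bullet> (w0 + p) \<le> bs (Inl (Inr q))"
        unfolding wp ms2 bs_def using Pg(2) q ye by simp
      thus "\<eta> (Inl (Inr q)) * (fst q \<bullet> snd p) \<le> 0" using act2[OF memK(2)[OF q]] ms2 by simp
    qed
    have pf: "(\<Sum>q\<in>Pf. \<eta> (Inl (Inl q)) * (fst q \<bullet> fst p)) = 0" unfolding p_def by (simp add: inner_prod_def)
    have "z \<bullet> p = a \<bullet> p + (\<Sum>k\<in>K. \<eta> k * (ms k \<bullet> p))" by (rule key)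
    also have "\<dots> = a \<bullet> p + 0 + (\<Sum>q\<in>Pg. \<eta> (Inl (Inr q)) * (fst q \<bullet> snd p))
        + \<zeta> \<bullet> (y - A *v xs) + zz \<bullet> (B *v 0)"
      unfolding split csum bsum pf by (simp add: p_def)
    finally have "- (t - gx) \<le> 0 + 0 + \<zeta> \<bullet> (y - A *v xs)"
      using ap pg by (simp add: z_def p_def)
    thus ?thesis unfolding v_def by simp
  qed
  have uf: "u \<in> csubdiff f xs" unfolding csubdiff_def
  proof (intro CollectI conjI allI)
    show "f xs < \<infinity>" by (rule fxs)
    fix y
    show "f xs + ereal (u \<bullet> (y - xs)) \<le> f y"
    proof (cases "f y = \<infinity>")
      case True thus ?thesis by simp
    next
      case False
      hence fy: "f y = ereal (real_of_ereal (f y))" using proper_fin[OF fp] by simp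
      hence "(y, real_of_ereal (f y)) \<in> epigraph_e f" by (simp add: epi_iff)
      from test1[OF this] show ?thesis by (subst fy) (simp add: fx)
    qed
  qed
  have vg: "v \<in> csubdiff g (A *v xs)" unfolding csubdiff_def
  proof (intro CollectI conjI allI)
    show "g (A *v xs) < \<infinity>" by (rule gxs)
    fix y
    show "g (A *v xs) + ereal (v \<bullet> (y - A *v xs)) \<le> g y"
    proof (cases "g y = \<infinity>")
      case True thus ?thesis by simp
    next
      case False
      hence gy: "g y = ereal (real_of_ereal (g y))" using proper_fin[OF gp] by simp
      hence "(y, real_of_ereal (g y)) \<in> epigraph_e g" by (simp add: epi_iff)
      from test2[OF this] show ?thesis by (subst gy) (simp add: gx)
    qed
  qed
  have zp: "zz \<in> subdiff_Phi_plus (B *v xs - b)" unfolding subdiff_Phi_plus_def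
  proof (intro CollectI allI conjI impI)
    fix i
    assume "(B *v xs - b) $ i = 0"
    hence "i \<in> I0" unfolding I0_def by simp
    thus "zz $ i \<ge> 0" unfolding zz_def using R(2) memK(3) by auto
  next
    fix i assume "(B *v xs - b) $ i \<noteq> 0"
    hence "i \<notin> I0" unfolding I0_def by simp
    thus "zz $ i = 0" unfolding zz_def by simp
  qed
  have "u + transpose A *v v + transpose B *v zz = 0" unfolding u_def by simp
  thus ?thesis unfolding stationary_def using uf vg zp by blast
qed

lemma part1:
  fixes f :: "real^'n \<Rightarrow> ereal" and g :: "real^'m \<Rightarrow> ereal"
    and A :: "real^'n^'m" and B :: "real^'n^'r" and b lam :: "real^'r"
  assumes fp: "proper_fun f" and gp: "proper_fun g" and lam: "\<forall>i. lam $ i > 0"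
    and st: "stationary f g A B b xs"
  shows "local_minimizer (Fobj f g A B b lam) xs"
proof -
  obtain u v zz where uvz: "u \<in> csubdiff f xs" "v \<in> csubdiff g (A *v xs)" "zz \<in> subdiff_Phi_plus (B *v xs - b)"
    "u + transpose A *v v + transpose B *v zz = 0" using st unfolding stationary_def by blast
  have fxs: "f xs < \<infinity>" and gxs: "g (A *v xs) < \<infinity>" using uvz(1,2) unfolding csubdiff_def by auto
  define fx where "fx = real_of_ereal (f xs)"
  define gx where "gx = real_of_ereal (g (A *v xs))"
  have fx: "f xs = ereal fx" unfolding fx_def using proper_fin[OF fp fxs] .
  have gx: "g (A *v xs) = ereal gx" unfolding gx_def using proper_fin[OF gp gxs] .
  have zz: "\<And>i. (B *v xs - b) $ i = 0 \<Longrightarrow> zz $ i \<ge> 0" "\<And>i. (B *v xs - b) $ i \<noteq> 0 \<Longrightarrow> zz $ i = 0"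
    using uvz(3) unfolding subdiff_Phi_plus_def by auto
  have "\<forall>\<^sub>F y in at xs. \<forall>i. ((B *v xs - b) $ i \<noteq> 0 \<longrightarrow> ((B *v y - b) $ i > 0 \<longleftrightarrow> (B *v xs - b) $ i > 0))
        \<and> ((B *v xs - b) $ i = 0 \<longrightarrow> zz $ i * (B *v y - b) $ i < lam $ i)"
  proof (rule eventually_all_finite)
    fix i
    have e2: "\<forall>\<^sub>F y in at xs. (B *v xs - b) $ i = 0 \<longrightarrow> zz $ i * (B *v y - b) $ i < lam $ i"
    proof (cases "(B *v xs - b) $ i = 0")
      case True
      have "((\<lambda>y. zz $ i * (B *v y - b) $ i) \<longlongrightarrow> zz $ i * (B *v xs - b) $ i) (at xs)"
        by (intro tendsto_intros Bcont)
      hence "\<forall>\<^sub>F y in at xs. zz $ i * (B *v y - b) $ i < lam $ i"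
        using True lam by (intro order_tendstoD(2)) auto
      thus ?thesis by (rule eventually_mono) simp
    qed simp
    have e1: "\<forall>\<^sub>F y in at xs. (B *v xs - b) $ i \<noteq> 0 \<longrightarrow> ((B *v y - b) $ i > 0 \<longleftrightarrow> (B *v xs - b) $ i > 0)"
    proof (cases "(B *v xs - b) $ i > 0")
      case True
      have "\<forall>\<^sub>F y in at xs. (B *v y - b) $ i > 0" using order_tendstoD(1)[OF Bcont True] .
      thus ?thesis by (rule eventually_mono) (use True in auto)
    next
      case False
      show ?thesis
      proof (cases "(B *v xs - b) $ i = 0")
        case True thus ?thesis by simp
      next
        case F2: False
        hence "(B *v xs - b) $ i < 0" using False by simp
        have "\<forall>\<^sub>F y in at xs. (B *v y - b) $ i < 0" using order_tendstoD(2)[OF Bcont \<open>(B *v xs - b) $ i < 0\<close>] .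
        thus ?thesis by (rule eventually_mono) (use False in auto)
      qed
    qed
    show "\<forall>\<^sub>F y in at xs. ((B *v xs - b) $ i \<noteq> 0 \<longrightarrow> ((B *v y - b) $ i > 0 \<longleftrightarrow> (B *v xs - b) $ i > 0))
        \<and> ((B *v xs - b) $ i = 0 \<longrightarrow> zz $ i * (B *v y - b) $ i < lam $ i)"
      using e1 e2 by eventually_elim auto
  qed
  then obtain d where d: "d > 0" "\<forall>y. y \<noteq> xs \<and> dist y xs < d \<longrightarrow>
      (\<forall>i. ((B *v xs - b) $ i \<noteq> 0 \<longrightarrow> ((B *v y - b) $ i > 0 \<longleftrightarrow> (B *v xs - b) $ i > 0))
        \<and> ((B *v xs - b) $ i = 0 \<longrightarrow> zz $ i * (B *v y - b) $ i < lam $ i))"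
    unfolding eventually_at by auto
  show ?thesis unfolding local_minimizer_def
  proof (intro exI[of _ d] conjI ballI)
    show "d > 0" by (rule d(1))
    fix y assume y: "y \<in> ball xs d"
    show "Fobj f g A B b lam xs \<le> Fobj f g A B b lam y"
    proof (cases "y = xs")
      case True thus ?thesis by simp
    next
      case False
      hence P: "\<forall>i. ((B *v xs - b) $ i \<noteq> 0 \<longrightarrow> ((B *v y - b) $ i > 0 \<longleftrightarrow> (B *v xs - b) $ i > 0))
        \<and> ((B *v xs - b) $ i = 0 \<longrightarrow> zz $ i * (B *v y - b) $ i < lam $ i)"
        using d(2) y by (simp add: dist_commute)
      show ?thesis
      proof (cases "f y < \<infinity> \<and> g (A *v y) < \<infinity>")
        case False
        hence "f y = \<infinity> \<or> g (A *v y) = \<infinity>" by auto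
        moreover have "f y \<noteq> -\<infinity>" "g (A *v y) \<noteq> -\<infinity>" using fp gp unfolding proper_fun_def by auto
        ultimately have "Fobj f g A B b lam y = \<infinity>" unfolding Fobj_def by auto
        thus ?thesis by simp
      next
        case True
        define fy where "fy = real_of_ereal (f y)"
        define gy where "gy = real_of_ereal (g (A *v y))"
        have fy: "f y = ereal fy" unfolding fy_def using proper_fin[OF fp] True by simp
        have gy: "g (A *v y) = ereal gy" unfolding gy_def using proper_fin[OF gp] True by simp
        have su: "fx + u \<bullet> (y - xs) \<le> fy"
          using uvz(1) unfolding csubdiff_def by (auto simp: fx fy elim!: allE[of _ y])
        have sv: "gx + v \<bullet> (A *v y - A *v xs) \<le> gy"
          using uvz(2) unfolding csubdiff_def by (auto simp: gx gy elim!: allE[of _ "A *v y"])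
        define dd where "dd = y - xs"
        have Ad: "A *v y - A *v xs = A *v dd" unfolding dd_def by (simp add: matrix_vector_mult_diff_distrib)
        have Bd: "B *v dd = (B *v y - b) - (B *v xs - b)" unfolding dd_def by (simp add: matrix_vector_mult_diff_distrib)
        have lin: "u \<bullet> dd + v \<bullet> (A *v dd) = - (zz \<bullet> (B *v dd))"
        proof -
          have "(u + transpose A *v v + transpose B *v zz) \<bullet> dd = 0" using uvz(4) by simp
          hence "u \<bullet> dd + v \<bullet> (A *v dd) + zz \<bullet> (B *v dd) = 0" by (simp only: inner_add_left tr_inner)
          thus ?thesis by linarith
        qed
        have trm: "lam $ i * (if (B *v y - b) $ i > 0 then 1 else 0) - lam $ i * (if (B *v xs - b) $ i > 0 then 1 else 0)
            \<ge> zz $ i * (B *v dd) $ i" for i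
        proof (cases "(B *v xs - b) $ i = 0")
          case True
          have "(B *v dd) $ i = (B *v y - b) $ i" unfolding Bd using True by simp
          moreover have "zz $ i * (B *v y - b) $ i < lam $ i" using P True by blast
          moreover have "zz $ i * (B *v y - b) $ i \<le> 0" if "\<not> (B *v y - b) $ i > 0"
            using zz(1)[OF True] that by (simp add: mult_nonneg_nonpos)
          ultimately show ?thesis using True by auto
        next
          case False
          thus ?thesis using zz(2)[OF False] P by auto
        qed
        have phi: "Phi_plus lam (B *v y - b) - Phi_plus lam (B *v xs - b) \<ge> zz \<bullet> (B *v dd)"
          unfolding Phi_plus_def vec_inner_sum sum_subtractf[symmetric] by (rule sum_mono) (use trm in auto)
        have "fx + gx + Phi_plus lam (B *v xs - b) \<le> fy + gy + Phi_plus lam (B *v y - b)"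
          using su sv lin phi unfolding Ad dd_def[symmetric] by linarith
        thus ?thesis unfolding Fobj_def fx gx fy gy by simp
      qed
    qed
  qed
qed


theorem mainTheorem11:
  fixes f :: "real^'n \<Rightarrow> ereal" and g :: "real^'m \<Rightarrow> ereal"
    and A :: "real^'n^'m" and B :: "real^'n^'r" and b lam :: "real^'r"
  assumes f: "proper_fun f" "lsc_fun f" "convex_fun f"
    and g: "proper_fun g" "lsc_fun g" "convex_fun g"
    and lam: "\<forall>i. lam $ i > 0"
  shows "(\<forall>xs. stationary f g A B b xs \<longrightarrow> local_minimizer (Fobj f g A B b lam) xs)
    \<and> (\<forall>xs. local_minimizer (Fobj f g A B b lam) xs \<and> Fobj f g A B b lam xs < \<infinity>
         \<and> (\<exists>x. (x \<in> rel_interior (edom f) \<or> (polyhedral_fun f \<and> x \<in> edom f))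
               \<and> (A *v x \<in> rel_interior (edom g) \<or> (polyhedral_fun g \<and> A *v x \<in> edom g))
               \<and> (\<forall>i. (B *v xs - b) $ i = 0 \<longrightarrow> (B *v x - b) $ i \<le> 0))
         \<longrightarrow> stationary f g A B b xs)"
proof (intro conjI allI impI)
  fix xs assume "stationary f g A B b xs"
  thus "local_minimizer (Fobj f g A B b lam) xs" using part1[OF f(1) g(1) lam] by blast
next
  fix xs assume H: "local_minimizer (Fobj f g A B b lam) xs \<and> Fobj f g A B b lam xs < \<infinity>
         \<and> (\<exists>x. (x \<in> rel_interior (edom f) \<or> (polyhedral_fun f \<and> x \<in> edom f))
               \<and> (A *v x \<in> rel_interior (edom g) \<or> (polyhedral_fun g \<and> A *v x \<in> edom g))
               \<and> (\<forall>i. (B *v xs - b) $ i = 0 \<longrightarrow> (B *v x - b) $ i \<le> 0))"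
  then obtain x where x: "x \<in> rel_interior (edom f) \<or> (polyhedral_fun f \<and> x \<in> edom f)"
    "A *v x \<in> rel_interior (edom g) \<or> (polyhedral_fun g \<and> A *v x \<in> edom g)"
    "\<forall>i. (B *v xs - b) $ i = 0 \<longrightarrow> (B *v x - b) $ i \<le> 0" by blast
  show "stationary f g A B b xs"
    using part2[OF f(1) f(3) g(1) g(3) _ _ x] H by blast
qed

end
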